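(* Let $\beta>0$ satisfy $\max_{I\ne *} |\mathbb{E}[\xi_\beta^I]| \le \sigma_\beta^2$. For any $h\ge 2$, $t \ge 0$, $L \in \mathbb{N}$, $\lambda \ge 0$ such that $\sigma_\beta^2 \, R_L^{(\lambda)} < 1$ we have, for any $q \in (1,\infty)$, \begin{equation*} \max_{I\ne *} \, \big\Vert \, \mathcal{W}_t \, |\widehat{\mathsf{U}}|_{L,\lambda, \beta}^{I} \, \tfrac{1}{\mathcal{W}_t} \, \big\Vert_{\ell^q \to \ell^q} \le 1 + \big(2\, \mathrm{e}^{4 \mathsf{c} \, t^2 L}\big)^h \, \frac{\sigma_\beta^2 \, R_L^{(\lambda)}} {1- \sigma_\beta^2 \, R_L^{(\lambda)}} \,. \end{equation*} Moreover, for any $s \ge 0$ and $\tau \in \{+1,-1\}$, \begin{equation*} \max_{\substack{J \, \text{pair}\\ I\ne *}} \, \big\Vert \, (\mathcal{V}^J_s)^{\tau} \, \mathcal{W}_t \, |\widehat{\mathsf{U}}|_{L,\lambda, \beta}^{I} \, \tfrac{1}{\mathcal{W}_t \, (\mathcal{V}^J_s)^{\tau} } \, \big\Vert_{\ell^q \to \ell^q} \le 1 + \big(2\, \mathrm{e}^{4 \mathsf{c} \, (t+s)^2 L}\big)^h \, \frac{\sigma_\beta^2 \, R_L^{(\lambda)}} {1- \sigma_\beta^2 \, R_L^{(\lambda)}} \,. \end{equation*}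
   Context: Let $S=(S_n)_{n\ge0}$ be a random walk on $\mathbb{Z}^2$ with symmetric step distribution $q_1(x)=q_1(-x)$ and sub-Gaussian tails: for some $c>0$, $\sum_{x\in\mathbb{Z}^2}\mathrm{e}^{t x^a}q_1(x)\le \mathrm{e}^{c t^2/2}$ for all $t\in\mathbb{R}$, $a=1,2$ (e.g. simple random walk). Let $q_n(x):=\mathrm{P}(S_n=x\mid S_0=0)$. Let $\mathsf{c}\in[1,\infty)$ be a constant such that for all $t\ge0$, $n\in\mathbb{N}$, $a=1,2$: $\sum_x \mathrm{e}^{t x^a}q_n(x)\le \mathrm{e}^{\mathsf{c} t^2 n/2}$, $\sum_x \mathrm{e}^{t x^a}q_n(x)^2/q_{2n}(0)\le \mathrm{e}^{\mathsf{c} t^2 n/2}$, $\sum_x \mathrm{e}^{t|x|}q_n(x)\le \mathsf{c}\,\mathrm{e}^{2\mathsf{c}t^2 n}$, $\sup_x \mathrm{e}^{t|x|}q_n(x)\le \mathsf{c}\,\mathrm{e}^{2\mathsf{c}t^2n}/n$ (such a constant exists under these assumptions). Disorder: $\omega(n,x)$ i.i.d. with mean $0$, variance $1$, $\lambda(\beta):=\log\mathbb{E}[\mathrm{e}^{\beta\omega}]<\infty$; $\xi_\beta(n,x):=\mathrm{e}^{\beta\omega(n,x)-\lambda(\beta)}-1$ and $\sigma_\beta^2:=\mathbb{E}[\xi_\beta^2]$. Fix $h\ge2$. For a partition $I=\{I^1,\dots,I^m\}$ of $\{1,\dots,h\}$ (with $*$ the partition into singletons), write $\mathbf{x}=(x^1,\dots,x^h)\in(\mathbb{Z}^2)^h$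 satisfies $\mathbf{x}\sim I$ if $x^a=x^b$ whenever $a,b$ lie in the same block, and $x^a\ne x^b$ whenever $a,b$ lie in distinct blocks both of size $\ge2$; $(\mathbb{Z}^2)^h_I:=\{\mathbf{x}:\mathbf{x}\sim I\}$. For $I\ne *$, $\mathbb{E}[\xi_\beta^I]:=\prod_{i:|I^i|\ge2}\mathbb{E}[\xi_\beta^{|I^i|}]$. A pair is a partition $\{\{a,b\},\{c\}:c\ne a,b\}$. Set $\mathsf{Q}^{I,J}_n(\mathbf{z},\mathbf{x}):=\mathbb{1}_{\{\mathbf{z}\sim I,\mathbf{x}\sim J\}}\prod_{i=1}^h q_n(x^i-z^i)$. For $m\ge1$ and $I\ne *$ let $|\mathsf{U}|^I_{m,\beta}(\mathbf{z},\mathbf{x}):=\sum_{k\ge1}|\mathbb{E}[\xi_\beta^I]|^k\sum_{0=n_0<n_1<\dots<n_k=m,\ \mathbf{y}_1,\dots,\mathbf{y}_{k-1}\in(\mathbb{Z}^2)^h}\prod_{i=1}^k\mathsf{Q}^{I,I}_{n_i-n_{i-1}}(\mathbf{y}_{i-1},\mathbf{y}_i)$ with $\mathbf{y}_0:=\mathbf{z}$, $\mathbf{y}_k:=\mathbf{x}$, and $|\widehat{\mathsf{U}}|^I_{L,\lambda,\beta}(\mathbf{z},\mathbf{x}):=\mathbb{1}_{\{\mathbf{z}=\mathbf{x}\sim I\}}+\sum_{m=1}^L\mathrm{e}^{-\lambda m}|\mathsf{U}|^I_{m,\beta}(\mathbf{z},\mathbf{x})$, viewed as an operator on $\ell^q((\mathbb{Z}^2)^h_I)$.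 Also $R_L^{(\lambda)}:=\sum_{n=1}^L\mathrm{e}^{-\lambda n}q_{2n}(0)$. Weights: $\mathcal{W}_t(\mathbf{x}):=\prod_{i=1}^h\mathrm{e}^{-t|x^i|}$, and for a pair $J=\{\{a,b\},\{c\}:c\ne a,b\}$, $\mathcal{V}^J_s(\mathbf{x}):=\mathrm{e}^{-s|x^a-x^b|}$; weights act as diagonal operators, i.e. $(\mathcal{W}\,\mathsf{A}\,\tfrac{1}{\mathcal{W}})(\mathbf{x},\mathbf{y})=\mathcal{W}(\mathbf{x})\mathsf{A}(\mathbf{x},\mathbf{y})/\mathcal{W}(\mathbf{y})$. $\|\cdot\|_{\ell^q\to\ell^q}$ is the operator norm. *)

theory Defs
  imports "HOL-Analysis.Analysis" "HOL-Probability.Probability"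
    "HOL-Library.Product_Plus" "HOL-Library.Disjoint_Sets"
begin

type_synonym site = "int \<times> int"
type_synonym config = "site list"  \<comment> \<open>configurations of length h, indices 0..h-1\<close>

definition znorm :: "site \<Rightarrow> real" where
  "znorm x = sqrt ((real_of_int (fst x))\<^sup>2 + (real_of_int (snd x))\<^sup>2)"

definition coord :: "nat \<Rightarrow> site \<Rightarrow> real" where
  "coord a x = (if a = 1 then real_of_int (fst x) else real_of_int (snd x))"

primrec walk :: "site pmf \<Rightarrow> nat \<Rightarrow> site pmf" where
  "walk p 0 = return_pmf 0"
| "walk p (Suc n) = bind_pmf (walk p n) (\<lambda>x. map_pmf (\<lambda>y. x + y) p)"

definition qn :: "site pmf \<Rightarrow> nat \<Rightarrow> site \<Rightarrow> real" where
  "qn p n x = pmf (walk p n) x"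

definition is_partition :: "nat \<Rightarrow> nat set set \<Rightarrow> bool" where
  "is_partition h I \<longleftrightarrow> partition_on {..<h} I"

definition star_partition :: "nat \<Rightarrow> nat set set" where
  "star_partition h = (\<lambda>i. {i}) ` {..<h}"

definition sim :: "config \<Rightarrow> nat set set \<Rightarrow> bool" where
  "sim x I \<longleftrightarrow>
     (\<forall>B\<in>I. \<forall>a\<in>B. \<forall>b\<in>B. x ! a = x ! b) \<and>
     (\<forall>B\<in>I. \<forall>B'\<in>I. B \<noteq> B' \<longrightarrow> card B \<ge> 2 \<longrightarrow> card B' \<ge> 2 \<longrightarrow>
        (\<forall>a\<in>B. \<forall>b\<in>B'. x ! a \<noteq> x ! b))"

definition configs :: "nat \<Rightarrow> config set" where
  "configs h = {x. length x = h}"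

definition configs_I :: "nat \<Rightarrow> nat set set \<Rightarrow> config set" where
  "configs_I h I = {x. length x = h \<and> sim x I}"

definition log_mgf :: "real measure \<Rightarrow> real \<Rightarrow> real" where
  "log_mgf \<mu> \<beta> = ln (\<integral>w. exp (\<beta> * w) \<partial>\<mu>)"

definition xi :: "real measure \<Rightarrow> real \<Rightarrow> real \<Rightarrow> real" where
  "xi \<mu> \<beta> w = exp (\<beta> * w - log_mgf \<mu> \<beta>) - 1"

definition xi_moment :: "real measure \<Rightarrow> real \<Rightarrow> nat \<Rightarrow> real" where
  "xi_moment \<mu> \<beta> k = (\<integral>w. (xi \<mu> \<beta> w) ^ k \<partial>\<mu>)"

definition sigma2 :: "real measure \<Rightarrow> real \<Rightarrow> real" where
  "sigma2 \<mu> \<beta> = xi_moment \<mu> \<beta> 2"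

definition xi_I :: "real measure \<Rightarrow> real \<Rightarrow> nat set set \<Rightarrow> real" where
  "xi_I \<mu> \<beta> I = (\<Prod>B\<in>{B\<in>I. card B \<ge> 2}. xi_moment \<mu> \<beta> (card B))"

definition QII :: "site pmf \<Rightarrow> nat \<Rightarrow> nat set set \<Rightarrow> nat \<Rightarrow> config \<Rightarrow> config \<Rightarrow> real" where
  "QII p h I n z x = (if sim z I \<and> sim x I then (\<Prod>i<h. qn p n (x ! i - z ! i)) else 0)"

text \<open>Uchain k m z x = sum over 0 = n_0 < n_1 < ... < n_k = m and y_1..y_(k-1) in (Z^2)^h
  of the product of QII (n_i - n_(i-1)) (y_(i-1), y_i), written recursively in k.\<close>
primrec Uchain :: "site pmf \<Rightarrow> nat \<Rightarrow> nat set set \<Rightarrow> nat \<Rightarrow> nat \<Rightarrow> config \<Rightarrow> config \<Rightarrow> real" where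
  "Uchain p h I 0 m z x = 0"
| "Uchain p h I (Suc k) m z x =
     (if k = 0 then (if m \<ge> 1 then QII p h I m z x else 0)
      else (\<Sum>n\<in>{1..<m}. \<Sum>\<^sub>\<infinity>y\<in>configs h. Uchain p h I k n z y * QII p h I (m - n) y x))"

definition absU :: "site pmf \<Rightarrow> real measure \<Rightarrow> real \<Rightarrow> nat \<Rightarrow> nat set set \<Rightarrow> nat \<Rightarrow> config \<Rightarrow> config \<Rightarrow> real" where
  "absU p \<mu> \<beta> h I m z x = (\<Sum>\<^sub>\<infinity>k\<in>{1..}. \<bar>xi_I \<mu> \<beta> I\<bar> ^ k * Uchain p h I k m z x)"

definition absUhat :: "site pmf \<Rightarrow> real measure \<Rightarrow> real \<Rightarrow> nat \<Rightarrow> nat set set \<Rightarrow> nat \<Rightarrow> real \<Rightarrow> config \<Rightarrow> config \<Rightarrow> real" where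
  "absUhat p \<mu> \<beta> h I L lam z x =
     (if z = x \<and> sim x I then 1 else 0) + (\<Sum>m=1..L. exp (- lam * real m) * absU p \<mu> \<beta> h I m z x)"

definition RL :: "site pmf \<Rightarrow> nat \<Rightarrow> real \<Rightarrow> real" where
  "RL p L lam = (\<Sum>n=1..L. exp (- lam * real n) * qn p (2 * n) 0)"

definition Wt :: "real \<Rightarrow> config \<Rightarrow> real" where
  "Wt t x = (\<Prod>i<length x. exp (- t * znorm (x ! i)))"

text \<open>V^J_s for the pair J = {{a,b}} \<union> {{c} : c \<noteq> a,b}\<close>
definition Vpair :: "real \<Rightarrow> nat \<Rightarrow> nat \<Rightarrow> config \<Rightarrow> real" where
  "Vpair s a b x = exp (- s * znorm (x ! a - x ! b))"

definition in_lq :: "real \<Rightarrow> 'a set \<Rightarrow> ('a \<Rightarrow> real) \<Rightarrow> bool" where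
  "in_lq q S f \<longleftrightarrow> (\<lambda>x. \<bar>f x\<bar> powr q) summable_on S"

definition lq_norm :: "real \<Rightarrow> 'a set \<Rightarrow> ('a \<Rightarrow> real) \<Rightarrow> real" where
  "lq_norm q S f = (\<Sum>\<^sub>\<infinity>x\<in>S. \<bar>f x\<bar> powr q) powr (1 / q)"

definition kernel_apply :: "'a set \<Rightarrow> ('a \<Rightarrow> 'a \<Rightarrow> real) \<Rightarrow> ('a \<Rightarrow> real) \<Rightarrow> 'a \<Rightarrow> real" where
  "kernel_apply S K f x = (\<Sum>\<^sub>\<infinity>y\<in>S. K x y * f y)"

definition lq_opnorm_le :: "real \<Rightarrow> 'a set \<Rightarrow> ('a \<Rightarrow> 'a \<Rightarrow> real) \<Rightarrow> real \<Rightarrow> bool" where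
  "lq_opnorm_le q S K C \<longleftrightarrow>
     (\<forall>f. in_lq q S f \<longrightarrow>
        (\<forall>x\<in>S. (\<lambda>y. \<bar>K x y * f y\<bar>) summable_on S) \<and>
        in_lq q S (kernel_apply S K f) \<and>
        lq_norm q S (kernel_apply S K f) \<le> C * lq_norm q S f)"

end

theory Submission
  imports Defs
begin

lemma nn_infsum_eq:
  fixes f :: "'a \<Rightarrow> real"
  assumes "f summable_on A" "\<And>x. x\<in>A \<Longrightarrow> f x \<ge> 0"
  shows "(\<integral>\<^sup>+x. ennreal (f x) \<partial>count_space A) = ennreal (infsum f A)"
proof -
  have "(\<lambda>x. norm (f x)) summable_on A"
    using assms by (subst summable_on_cong[where g=f]) auto
  then have "Infinite_Set_Sum.abs_summable_on f A"
    using abs_summable_equivalent by blast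
  then show ?thesis
    using assms nn_integral_conv_infsetsum infsetsum_infsum by metis
qed

lemma nn_infsum_le:
  fixes f :: "'a \<Rightarrow> real"
  assumes "\<And>x. x\<in>A \<Longrightarrow> f x \<ge> 0"
  shows "ennreal (infsum f A) \<le> (\<integral>\<^sup>+x. ennreal (f x) \<partial>count_space A)"
proof (cases "f summable_on A")
  case True then show ?thesis using nn_infsum_eq[OF True assms] by simp
next
  case False then show ?thesis by (simp add: infsum_not_exists)
qed

lemma nn_bound_summable:
  fixes f :: "'a \<Rightarrow> real"
  assumes "\<And>x. x\<in>A \<Longrightarrow> f x \<ge> 0" "C \<ge> 0"
    and "(\<integral>\<^sup>+x. ennreal (f x) \<partial>count_space A) \<le> ennreal C"
  shows "f summable_on A \<and> infsum f A \<le> C"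
proof -
  have "integrable (count_space A) f"
  proof (rule integrableI_bounded)
    have "(\<integral>\<^sup>+x. ennreal (norm (f x)) \<partial>count_space A) = (\<integral>\<^sup>+x. ennreal (f x) \<partial>count_space A)"
      using assms(1) by (intro nn_integral_cong) auto
    then show "(\<integral>\<^sup>+x. ennreal (norm (f x)) \<partial>count_space A) < \<infinity>"
      using assms(3) by (simp add: le_less_trans)
  qed simp
  then have "Infinite_Set_Sum.abs_summable_on f A" by (simp add: abs_summable_on_def)
  then have "(\<lambda>x. norm (f x)) summable_on A"
    using abs_summable_equivalent by blast
  then have s: "f summable_on A"
    using assms(1) by (subst summable_on_cong[where g="\<lambda>x. norm (f x)"]) auto
  then have "ennreal (infsum f A) \<le> ennreal C"
    using nn_infsum_eq[OF s assms(1)] assms(3) by simp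
  then show ?thesis using s assms(2) by simp
qed

lemma nn_point_le:
  assumes "y \<in> S"
  shows "f y \<le> (\<integral>\<^sup>+x. f x \<partial>count_space S)"
proof -
  have "(\<integral>\<^sup>+x. f x \<partial>count_space {y}) \<le> (\<integral>\<^sup>+x. f x \<partial>count_space S)"
  proof -
    have "(\<integral>\<^sup>+x. f x \<partial>count_space {y}) = (\<integral>\<^sup>+x. f x * indicator {y} x \<partial>count_space UNIV)"
      by (rule nn_integral_count_space_indicator) simp
    also have "\<dots> \<le> (\<integral>\<^sup>+x. f x * indicator S x \<partial>count_space UNIV)"
      using assms by (intro nn_integral_mono) (auto simp: indicator_def)
    also have "\<dots> = (\<integral>\<^sup>+x. f x \<partial>count_space S)"
      by (cases "S = UNIV") (simp_all add: nn_integral_count_space_indicator)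
    finally show ?thesis .
  qed
  then show ?thesis by (simp add: nn_integral_count_space_finite)
qed

lemma abs_le_one_plus_powr:
  fixes x q :: real assumes "q \<ge> 1"
  shows "\<bar>x\<bar> \<le> 1 + \<bar>x\<bar> powr q"
proof (cases "\<bar>x\<bar> \<le> 1")
  case True then show ?thesis by (smt (verit) powr_ge_zero)
next
  case False
  then have "\<bar>x\<bar> powr 1 \<le> \<bar>x\<bar> powr q" using assms by (intro powr_mono) auto
  then show ?thesis using False by simp
qed

lemma young_step:
  fixes a u q :: real
  assumes q: "q > 1" and a: "a \<ge> 0" and u: "u > 0"
  shows "a * u powr (q - 1) \<le> a powr q / q + u powr q * ((q - 1) / q)"
proof -
  define q' where "q' = q / (q - 1)"
  have q'1: "q' > 1" using q by (simp add: q'_def field_simps)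
  have conj: "1/q + 1/q' = 1" using q by (simp add: q'_def field_simps)
  have "a * u powr (q - 1) \<le> a powr q / q + (u powr (q - 1)) powr q' / q'"
    using Youngs_inequality[OF q q'1 conj a] u by simp
  also have "(u powr (q - 1)) powr q' = u powr q"
    using q by (simp add: powr_powr q'_def)
  also have "u powr q / q' = u powr q * ((q - 1) / q)"
    by (simp add: q'_def)
  finally show ?thesis .
qed

lemma schur:
  fixes K :: "'a \<Rightarrow> 'a \<Rightarrow> real" and S :: "'a set"
  assumes q1: "q > 1" and cS: "countable S" and A0: "A \<ge> 0"
   and Kn: "\<And>z x. z\<in>S \<Longrightarrow> x\<in>S \<Longrightarrow> K z x \<ge> 0"
   and row: "\<And>z. z\<in>S \<Longrightarrow> (\<integral>\<^sup>+x. ennreal (K z x) \<partial>count_space S) \<le> ennreal A"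
   and col: "\<And>x. x\<in>S \<Longrightarrow> (\<integral>\<^sup>+z. ennreal (K z x) \<partial>count_space S) \<le> ennreal A"
  shows "lq_opnorm_le q S K A"
  unfolding lq_opnorm_le_def
proof (intro allI impI conjI ballI)
  fix f assume "in_lq q S f"
  define F where "F x = \<bar>f x\<bar> powr q" for x
  have Fs: "F summable_on S" using \<open>in_lq q S f\<close> by (simp add: in_lq_def F_def[abs_def])
  have F0: "F x \<ge> 0" for x by (simp add: F_def)
  have rows: "K z summable_on S" "infsum (K z) S \<le> A" if "z \<in> S" for z
    using nn_bound_summable[of S "K z" A] Kn row that A0 by auto
  have cols: "(\<lambda>z. K z x) summable_on S" "infsum (\<lambda>z. K z x) S \<le> A" if "x \<in> S" for x
    using nn_bound_summable[of S "\<lambda>z. K z x" A] Kn col that A0 by auto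
  have KA: "K z x \<le> A" if "z \<in> S" "x \<in> S" for z x
    using order_trans[OF nn_point_le[OF that(2), of "\<lambda>x. ennreal (K z x)"] row[OF that(1)]] A0 by simp
  have KFs: "(\<lambda>y. K z y * F y) summable_on S" if "z \<in> S" for z
  proof (rule summable_on_comparison_test)
    show "(\<lambda>y. A * F y) summable_on S" using Fs by (rule summable_on_cmult_right)
    show "K z y * F y \<le> A * F y" if "y \<in> S" for y
      using KA[OF \<open>z\<in>S\<close> that] F0 by (simp add: mult_right_mono)
    show "0 \<le> K z y * F y" if "y \<in> S" for y using Kn \<open>z\<in>S\<close> that F0 by simp
  qed
  have Kfs: "(\<lambda>y. K z y * \<bar>f y\<bar>) summable_on S" if "z \<in> S" for z
  proof (rule summable_on_comparison_test)
    show "(\<lambda>y. K z y + K z y * F y) summable_on S"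
      using rows(1)[OF that] KFs[OF that] by (rule summable_on_add)
    show "K z y * \<bar>f y\<bar> \<le> K z y + K z y * F y" if "y \<in> S" for y
    proof -
      have "K z y * \<bar>f y\<bar> \<le> K z y * (1 + F y)"
        using Kn[OF \<open>z\<in>S\<close> that] abs_le_one_plus_powr[of q "f y"] q1
        by (intro mult_left_mono) (auto simp: F_def)
      then show ?thesis by (simp add: algebra_simps)
    qed
    show "0 \<le> K z y * \<bar>f y\<bar>" if "y \<in> S" for y using Kn \<open>z\<in>S\<close> that by simp
  qed
  show "(\<lambda>y. \<bar>K x y * f y\<bar>) summable_on S" if "x \<in> S" for x
    using Kfs[OF that] Kn[OF that] by (subst summable_on_cong[where g="\<lambda>y. K x y * \<bar>f y\<bar>"]) (auto simp: abs_mult)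
  define g where "g z = infsum (\<lambda>y. K z y * \<bar>f y\<bar>) S" for z
  define H where "H z = infsum (\<lambda>y. K z y * F y) S" for z
  have g0: "g z \<ge> 0" if "z \<in> S" for z unfolding g_def using Kn that by (intro infsum_nonneg) auto
  have H0: "H z \<ge> 0" if "z \<in> S" for z unfolding H_def using Kn that F0 by (intro infsum_nonneg) auto
  have app: "\<bar>kernel_apply S K f z\<bar> \<le> g z" if "z \<in> S" for z
  proof -
    have "(\<lambda>y. norm (K z y * f y)) summable_on S"
      using Kfs[OF that] Kn[OF that] by (subst summable_on_cong[where g="\<lambda>y. K z y * \<bar>f y\<bar>"]) (auto simp: abs_mult)
    then have "\<bar>kernel_apply S K f z\<bar> \<le> infsum (\<lambda>y. norm (K z y * f y)) S"
      unfolding kernel_apply_def using norm_infsum_bound[of "\<lambda>y. K z y * f y" S] by simp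
    also have "\<dots> = g z" unfolding g_def using Kn[OF that] by (intro infsum_cong) (auto simp: abs_mult)
    finally show ?thesis .
  qed
  have gH: "g z powr q \<le> A powr (q - 1) * H z" if z: "z \<in> S" for z
  proof (cases "g z = 0 \<or> A = 0")
    case True
    show ?thesis
    proof (cases "g z = 0")
      case True then show ?thesis using H0[OF z] by simp
    next
      case False
      with True have "A = 0" by simp
      then have "K z y = 0" if "y \<in> S" for y using KA[OF z that] Kn[OF z that] by simp
      then have "g z = 0" unfolding g_def by (simp add: infsum_0)
      with False show ?thesis by simp
    qed
  next
    case False
    then have gp: "g z > 0" and Ap: "A > 0" using g0[OF z] A0 by auto
    define u where "u = g z / A"
    have up: "u > 0" using gp Ap by (simp add: u_def)
    have "g z * u powr (q - 1) = infsum (\<lambda>y. K z y * (\<bar>f y\<bar> * u powr (q - 1))) S"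
      unfolding g_def by (simp add: infsum_cmult_left'[symmetric] mult.assoc)
    also have "\<dots> \<le> infsum (\<lambda>y. K z y * F y / q + K z y * (u powr q * ((q - 1) / q))) S"
    proof (rule infsum_mono)
      show "(\<lambda>y. K z y * (\<bar>f y\<bar> * u powr (q - 1))) summable_on S"
        using summable_on_cmult_left[OF Kfs[OF z], of "u powr (q - 1)"] by (simp add: mult.assoc)
      show "(\<lambda>y. K z y * F y / q + K z y * (u powr q * ((q - 1) / q))) summable_on S"
        using summable_on_cmult_left[OF KFs[OF z], of "inverse q"] summable_on_cmult_left[OF rows(1)[OF z], of "u powr q * ((q - 1) / q)"]
        by (intro summable_on_add) (auto simp: divide_inverse)
      show "K z y * (\<bar>f y\<bar> * u powr (q - 1)) \<le> K z y * F y / q + K z y * (u powr q * ((q - 1) / q))"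
        if "y \<in> S" for y
      proof -
        have "K z y * (\<bar>f y\<bar> * u powr (q - 1)) \<le> K z y * (F y / q + u powr q * ((q - 1) / q))"
          using young_step[OF q1 _ up, of "\<bar>f y\<bar>"] Kn[OF z that] by (intro mult_left_mono) (auto simp: F_def)
        then show ?thesis by (simp add: algebra_simps)
      qed
    qed
    also have "\<dots> = H z / q + infsum (K z) S * (u powr q * ((q - 1) / q))"
      unfolding H_def
      using KFs[OF z] rows(1)[OF z]
      by (subst infsum_add) (auto simp: infsum_cmult_left' divide_inverse intro: summable_on_cmult_left)
    also have "\<dots> \<le> H z / q + A * (u powr q * ((q - 1) / q))"
      using rows(2)[OF z] q1 up by (intro add_left_mono mult_right_mono) auto
    finally have ineq: "g z * u powr (q - 1) \<le> H z / q + A * (u powr q * ((q - 1) / q))" .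
    have e1: "g z * u powr (q - 1) = g z powr q / A powr (q - 1)"
      using gp Ap by (simp add: u_def powr_divide powr_diff powr_one[symmetric] del: powr_one)
    have e2: "A * u powr q = g z powr q / A powr (q - 1)"
      using gp Ap by (simp add: u_def powr_divide powr_diff)
    from ineq e1 e2 have "g z powr q / A powr (q - 1) \<le> H z / q + g z powr q / A powr (q - 1) * ((q - 1) / q)"
      by (simp add: mult.assoc[symmetric])
    moreover have "\<And>X::real. X \<le> H z / q + X * ((q - 1) / q) \<Longrightarrow> X \<le> H z"
    proof -
      fix X :: real assume "X \<le> H z / q + X * ((q - 1) / q)"
      then have "X * q \<le> H z + X * (q - 1)" using q1 by (simp add: field_simps)
      then show "X \<le> H z" by (simp add: algebra_simps)
    qed
    ultimately have "g z powr q / A powr (q - 1) \<le> H z" by blast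
    then show ?thesis using Ap by (simp add: field_simps)
  qed
  have Kfz: "\<bar>kernel_apply S K f z\<bar> powr q \<le> A powr (q - 1) * H z" if z: "z \<in> S" for z
    using powr_mono2[of q "\<bar>kernel_apply S K f z\<bar>" "g z"] app[OF z] q1 gH[OF z] by linarith
  have Hs: "ennreal (H z) = (\<integral>\<^sup>+y. ennreal (K z y * F y) \<partial>count_space S)" if z: "z \<in> S" for z
    unfolding H_def using nn_infsum_eq[OF KFs[OF z]] Kn[OF z] F0 by simp
  have FS: "ennreal (infsum F S) = (\<integral>\<^sup>+y. ennreal (F y) \<partial>count_space S)"
    using nn_infsum_eq[OF Fs] F0 by simp
  have "(\<integral>\<^sup>+z. ennreal (\<bar>kernel_apply S K f z\<bar> powr q) \<partial>count_space S)
      \<le> (\<integral>\<^sup>+z. ennreal (A powr (q - 1)) * ennreal (H z) \<partial>count_space S)"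
    using Kfz H0 by (intro nn_integral_mono) (simp add: ennreal_mult[symmetric] ennreal_leI)
  also have "\<dots> = ennreal (A powr (q - 1)) * (\<integral>\<^sup>+z. (\<integral>\<^sup>+y. ennreal (K z y * F y) \<partial>count_space S) \<partial>count_space S)"
    by (subst nn_integral_cmult[symmetric]) (auto intro!: nn_integral_cong simp: Hs)
  finally have c1: "(\<integral>\<^sup>+z. ennreal (\<bar>kernel_apply S K f z\<bar> powr q) \<partial>count_space S)
      \<le> ennreal (A powr (q - 1)) * (\<integral>\<^sup>+z. (\<integral>\<^sup>+y. ennreal (K z y * F y) \<partial>count_space S) \<partial>count_space S)" .
  have "(\<integral>\<^sup>+z. (\<integral>\<^sup>+y. ennreal (K z y * F y) \<partial>count_space S) \<partial>count_space S)
      = (\<integral>\<^sup>+y. (\<integral>\<^sup>+z. ennreal (K z y * F y) \<partial>count_space S) \<partial>count_space S)"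
    by (rule nn_integral_count_space_nn_integral[OF cS]) simp
  also have "\<dots> = (\<integral>\<^sup>+y. (\<integral>\<^sup>+z. ennreal (K z y) \<partial>count_space S) * ennreal (F y) \<partial>count_space S)"
    using Kn F0 by (intro nn_integral_cong) (auto simp: ennreal_mult nn_integral_multc[symmetric] intro!: nn_integral_cong)
  also have "\<dots> \<le> (\<integral>\<^sup>+y. ennreal A * ennreal (F y) \<partial>count_space S)"
    using col by (intro nn_integral_mono mult_right_mono) auto
  also have "\<dots> = ennreal A * ennreal (infsum F S)"
    by (simp add: nn_integral_cmult FS)
  finally have c2: "(\<integral>\<^sup>+z. (\<integral>\<^sup>+y. ennreal (K z y * F y) \<partial>count_space S) \<partial>count_space S) \<le> ennreal A * ennreal (infsum F S)" .
  have a: "(\<integral>\<^sup>+z. ennreal (\<bar>kernel_apply S K f z\<bar> powr q) \<partial>count_space S) \<le> ennreal (A powr (q - 1)) * (ennreal A * ennreal (infsum F S))"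
    using c1 mult_left_mono[OF c2, of "ennreal (A powr (q - 1))"] by simp
  have main: "(\<integral>\<^sup>+z. ennreal (\<bar>kernel_apply S K f z\<bar> powr q) \<partial>count_space S)
      \<le> ennreal (A powr q * infsum F S)"
  proof -
    have "A powr (q - 1) * A = A powr q"
      using A0 q1 by (cases "A = 0") (auto simp: powr_diff)
    moreover have "infsum F S \<ge> 0" using F0 by (simp add: infsum_nonneg)
    ultimately show ?thesis using a A0 by (simp add: ennreal_mult[symmetric] mult.assoc[symmetric])
  qed
  have IF0: "infsum F S \<ge> 0" using F0 by (simp add: infsum_nonneg)
  have bnd: "(\<lambda>z. \<bar>kernel_apply S K f z\<bar> powr q) summable_on S \<and>
      infsum (\<lambda>z. \<bar>kernel_apply S K f z\<bar> powr q) S \<le> A powr q * infsum F S"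
    using nn_bound_summable[OF _ _ main] IF0 by simp
  then show "in_lq q S (kernel_apply S K f)" by (simp add: in_lq_def)
  have "lq_norm q S (kernel_apply S K f) \<le> (A powr q * infsum F S) powr (1 / q)"
    unfolding lq_norm_def using bnd q1 by (intro powr_mono2) (auto intro: infsum_nonneg)
  also have "\<dots> = A * lq_norm q S f"
    using A0 IF0 q1 by (simp add: lq_norm_def powr_mult powr_powr F_def[abs_def])
  finally show "lq_norm q S (kernel_apply S K f) \<le> A * lq_norm q S f" .
qed

lemma qn_nonneg: "qn p n x \<ge> 0" by (simp add: qn_def)
lemma qn_le1: "qn p n x \<le> 1" by (simp add: qn_def pmf_le_1)

lemma walk_symm:
  assumes symm: "\<And>x. pmf p x = pmf p (- x)"
  shows "map_pmf uminus (walk p n) = walk p n"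
proof -
  have pS: "map_pmf uminus p = p"
  proof (rule pmf_eqI)
    fix x :: site
    have "pmf (map_pmf uminus p) x = pmf (map_pmf uminus p) (- (- x))" by simp
    also have "\<dots> = pmf p (- x)" by (rule pmf_map_inj') (simp add: inj_def)
    finally show "pmf (map_pmf uminus p) x = pmf p x" using symm[of x] by simp
  qed
  show ?thesis
  proof (induction n)
    case 0 then show ?case by simp
  next
    case (Suc n)
    have "map_pmf uminus (walk p (Suc n)) =
        bind_pmf (walk p n) (\<lambda>x. map_pmf (\<lambda>y. - (x + y)) p)"
      by (simp add: map_bind_pmf map_pmf_comp)
    also have "\<dots> = bind_pmf (walk p n) (\<lambda>x. map_pmf (\<lambda>y. - x + y) (map_pmf uminus p))"
    proof (intro bind_pmf_cong refl)
      fix x :: site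
      have "(\<lambda>y::site. - (x + y)) = (\<lambda>y. - x + y) \<circ> uminus"
        by (rule ext) (simp add: minus_add)
      then show "map_pmf (\<lambda>y. - (x + y)) p = map_pmf (\<lambda>y. - x + y) (map_pmf uminus p)"
        by (simp add: map_pmf_comp)
    qed
    also have "\<dots> = bind_pmf (map_pmf uminus (walk p n)) (\<lambda>x. map_pmf (\<lambda>y. x + y) p)"
      by (simp only: pS bind_map_pmf o_def)
    also have "\<dots> = walk p (Suc n)" using Suc by simp
    finally show ?case .
  qed
qed

lemma qn_symm:
  assumes symm: "\<And>x. pmf p x = pmf p (- x)"
  shows "qn p n (- x) = qn p n x"
proof -
  have "qn p n x = pmf (map_pmf uminus (walk p n)) (- x)"
    by (subst pmf_map_inj') (auto simp: inj_def qn_def)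
  then show ?thesis using walk_symm[OF symm] by (simp add: qn_def)
qed

lemma walk_add: "walk p (m + n) = bind_pmf (walk p m) (\<lambda>x. map_pmf (\<lambda>y. x + y) (walk p n))"
proof (induction n)
  case 0 then show ?case by (simp add: bind_return_pmf')
next
  case (Suc n)
  have "walk p (m + Suc n) = bind_pmf (walk p (m + n)) (\<lambda>x. map_pmf (\<lambda>y. x + y) p)" by simp
  also have "\<dots> = bind_pmf (walk p m) (\<lambda>x. bind_pmf (walk p n) (\<lambda>w. map_pmf (\<lambda>y. x + w + y) p))"
    by (simp add: Suc bind_assoc_pmf bind_map_pmf)
  also have "\<dots> = bind_pmf (walk p m) (\<lambda>x. map_pmf (\<lambda>y. x + y) (walk p (Suc n)))"
    by (simp add: map_bind_pmf map_pmf_comp add.assoc)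
  finally show ?case .
qed

lemma q2n_pos:
  assumes symm: "\<And>x. pmf p x = pmf p (- x)"
  shows "qn p (2 * n) 0 > 0"
proof -
  obtain x where x: "x \<in> set_pmf (walk p n)" using set_pmf_not_empty by fast
  have "- x \<in> set_pmf (map_pmf uminus (walk p n))" using x by simp
  then have mx: "- x \<in> set_pmf (walk p n)" using walk_symm[OF symm] by simp
  have "0 \<in> set_pmf (walk p (n + n))"
    using x mx by (auto simp: walk_add intro!: bexI[of _ x] image_eqI[of 0 _ "- x"])
  then show ?thesis by (simp add: qn_def mult_2 pmf_positive_iff)
qed

definition tilt :: "nat \<Rightarrow> site \<Rightarrow> real" where
  "tilt d w = (if d = 0 then coord 1 w else if d = 1 then - coord 1 w
     else if d = 2 then coord 2 w else - coord 2 w)"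

lemma coord_add: "coord a (x + y) = coord a x + coord a y"
  by (simp add: coord_def)
lemma coord_minus: "coord a (- x) = - coord a x"
  by (simp add: coord_def)
lemma coord_diff: "coord a (x - y) = coord a x - coord a y"
  by (simp add: coord_def)
lemma tilt_add: "tilt d (x + y) = tilt d x + tilt d y"
  by (simp add: tilt_def coord_add)
lemma tilt_diff: "tilt d (x - y) = tilt d x - tilt d y"
  by (simp add: tilt_def coord_diff)
lemma tilt_minus: "tilt d (- x) = - tilt d x"
  by (simp add: tilt_def coord_minus)

lemma nn_reflect: "(\<integral>\<^sup>+w. g (- w) \<partial>count_space (UNIV::site set)) = (\<integral>\<^sup>+w. g w \<partial>count_space UNIV)"
  by (rule nn_integral_bij_count_space) (rule o_bij[of uminus], auto)

lemma nn_shift: "(\<integral>\<^sup>+w. g (w - c) \<partial>count_space (UNIV::site set)) = (\<integral>\<^sup>+w. g w \<partial>count_space UNIV)"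
proof -
  have "bij_betw (\<lambda>w. w - c) UNIV (UNIV::site set)"
    by (rule o_bij[of "\<lambda>w. w + c"]) auto
  then show ?thesis by (rule nn_integral_bij_count_space)
qed

lemma nn_shift': "(\<integral>\<^sup>+w. g (c - w) \<partial>count_space (UNIV::site set)) = (\<integral>\<^sup>+w. g w \<partial>count_space UNIV)"
proof -
  have "bij_betw (\<lambda>w. c - w) UNIV (UNIV::site set)"
    by (rule o_bij[of "\<lambda>w. c - w"]) auto
  then show ?thesis by (rule nn_integral_bij_count_space)
qed

lemma tilt_cases: "d < 4 \<Longrightarrow> (\<exists>a\<in>{1,2::nat}. (\<forall>w. tilt d w = coord a w) \<or> (\<forall>w. tilt d w = coord a (- w)))"
  by (auto simp: tilt_def coord_minus)

lemma tilt_sum_bound: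
  fixes F :: "real \<Rightarrow> site \<Rightarrow> real"
  assumes d: "d < 4" and Fsym: "\<And>th w. F th (- w) = F th w" and F0: "\<And>th w. F th w \<ge> 0"
    and base: "\<And>a. a \<in> {1,2} \<Longrightarrow> (\<lambda>w. exp (\<theta> * coord a w) * F \<theta> w) summable_on UNIV \<and>
        (\<Sum>\<^sub>\<infinity>w. exp (\<theta> * coord a w) * F \<theta> w) \<le> B"
  shows "(\<integral>\<^sup>+w. ennreal (exp (\<theta> * tilt d w) * F \<theta> w) \<partial>count_space UNIV) \<le> ennreal B"
proof -
  obtain a where a: "a \<in> {1,2}" and ca: "(\<forall>w. tilt d w = coord a w) \<or> (\<forall>w. tilt d w = coord a (- w))"
    using tilt_cases[OF d] by blast
  have main: "(\<integral>\<^sup>+w. ennreal (exp (\<theta> * coord a w) * F \<theta> w) \<partial>count_space UNIV) \<le> ennreal B"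
    using base[OF a] nn_infsum_eq[of "\<lambda>w. exp (\<theta> * coord a w) * F \<theta> w" UNIV] F0
    by (simp add: ennreal_leI)
  show ?thesis
  proof (cases "\<forall>w. tilt d w = coord a w")
    case True
    then have t: "\<And>w. tilt d w = coord a w" by blast
    show ?thesis using main by (simp only: t)
  next
    case False
    then have t: "\<And>w. tilt d w = coord a (- w)" using ca by blast
    have "(\<integral>\<^sup>+w. ennreal (exp (\<theta> * tilt d w) * F \<theta> w) \<partial>count_space UNIV)
       = (\<integral>\<^sup>+w. ennreal (exp (\<theta> * coord a (- w)) * F \<theta> (- w)) \<partial>count_space UNIV)"
      by (simp add: t Fsym)
    also have "\<dots> = (\<integral>\<^sup>+w. ennreal (exp (\<theta> * coord a w) * F \<theta> w) \<partial>count_space UNIV)"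
      using nn_reflect[of "\<lambda>w. ennreal (exp (\<theta> * coord a w) * F \<theta> w)"] by simp
    finally show ?thesis using main by simp
  qed
qed

lemma nn_count_mono:
  assumes "A \<subseteq> B"
  shows "(\<integral>\<^sup>+x. f x \<partial>count_space A) \<le> (\<integral>\<^sup>+x. f x \<partial>count_space B)"
proof -
  have "(\<integral>\<^sup>+x. f x \<partial>count_space A) = (\<integral>\<^sup>+x. f x * indicator A x \<partial>count_space UNIV)"
    by (cases "A = UNIV") (simp_all add: nn_integral_count_space_indicator)
  also have "\<dots> \<le> (\<integral>\<^sup>+x. f x * indicator B x \<partial>count_space UNIV)"
    using assms by (intro nn_integral_mono) (auto simp: indicator_def)
  also have "\<dots> = (\<integral>\<^sup>+x. f x \<partial>count_space B)"
    by (cases "B = UNIV") (simp_all add: nn_integral_count_space_indicator)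
  finally show ?thesis .
qed

lemma nn_count_restrict:
  assumes "A \<subseteq> B" "\<And>x. x \<in> B \<Longrightarrow> x \<notin> A \<Longrightarrow> f x = 0"
  shows "(\<integral>\<^sup>+x. f x \<partial>count_space B) = (\<integral>\<^sup>+x. f x \<partial>count_space A)"
proof -
  have "(\<integral>\<^sup>+x. f x \<partial>count_space B) = (\<integral>\<^sup>+x. f x * indicator B x \<partial>count_space UNIV)"
    by (cases "B = UNIV") (simp_all add: nn_integral_count_space_indicator)
  also have "\<dots> = (\<integral>\<^sup>+x. f x * indicator A x \<partial>count_space UNIV)"
    using assms by (intro nn_integral_cong) (auto simp: indicator_def)
  also have "\<dots> = (\<integral>\<^sup>+x. f x \<partial>count_space A)"
    by (cases "A = UNIV") (simp_all add: nn_integral_count_space_indicator)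
  finally show ?thesis .
qed

lemma configs_Suc_bij: "bij_betw (\<lambda>(v, ys). v # ys) (UNIV \<times> configs h) (configs (Suc h))"
proof -
  have "inj_on (\<lambda>(v, ys). v # ys) (UNIV \<times> configs h)" by (auto simp: inj_on_def)
  moreover have "(\<lambda>(v, ys). v # ys) ` (UNIV \<times> configs h) = configs (Suc h)"
  proof
    show "(\<lambda>(v, ys). v # ys) ` (UNIV \<times> configs h) \<subseteq> configs (Suc h)"
      by (auto simp: configs_def)
    show "configs (Suc h) \<subseteq> (\<lambda>(v, ys). v # ys) ` (UNIV \<times> configs h)"
    proof
      fix y assume "y \<in> configs (Suc h)"
      then obtain v ys where "y = v # ys" "length ys = h"
        by (cases y) (auto simp: configs_def)
      then show "y \<in> (\<lambda>(v, ys). v # ys) ` (UNIV \<times> configs h)"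
        by (auto simp: configs_def image_def)
    qed
  qed
  ultimately show ?thesis by (simp add: bij_betw_def)
qed

lemma countable_configs: "countable (configs h)"
  by (rule countableI_type)

lemma nn_prod_configs:
  fixes G :: "nat \<Rightarrow> site \<Rightarrow> ennreal"
  shows "(\<integral>\<^sup>+y. (\<Prod>i<h. G i (y ! i)) \<partial>count_space (configs h)) = (\<Prod>i<h. \<integral>\<^sup>+v. G i v \<partial>count_space UNIV)"
proof (induction h arbitrary: G)
  case 0
  have "configs 0 = {[]}" by (auto simp: configs_def)
  then show ?case by (simp add: nn_integral_count_space_finite)
next
  case (Suc h)
  have "(\<integral>\<^sup>+y. (\<Prod>i<Suc h. G i (y ! i)) \<partial>count_space (configs (Suc h)))
      = (\<integral>\<^sup>+z. (\<Prod>i<Suc h. G i (((\<lambda>(v, ys). v # ys) z) ! i)) \<partial>count_space (UNIV \<times> configs h))"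
    using nn_integral_bij_count_space[OF configs_Suc_bij[of h], where f="\<lambda>y. \<Prod>i<Suc h. G i (y ! i)"] by simp
  also have "\<dots> = (\<integral>\<^sup>+z. G 0 (fst z) * (\<Prod>i<h. G (Suc i) (snd z ! i)) \<partial>count_space (UNIV \<times> configs h))"
    by (intro nn_integral_cong) (auto simp del: prod.lessThan_Suc simp add: prod.lessThan_Suc_shift)
  also have "\<dots> = (\<integral>\<^sup>+v. \<integral>\<^sup>+ys. G 0 v * (\<Prod>i<h. G (Suc i) (ys ! i)) \<partial>count_space (configs h) \<partial>count_space UNIV)"
  proof -
    interpret sigma_finite_measure "count_space (configs h)"
      by (rule sigma_finite_measure_count_space_countable[OF countable_configs])
    have pm: "count_space (UNIV::site set) \<Otimes>\<^sub>M count_space (configs h) = count_space (UNIV \<times> configs h)"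
      by (rule pair_measure_countable) (auto intro: countableI_type)
    have "(\<integral>\<^sup>+v. \<integral>\<^sup>+ys. (\<lambda>z. G 0 (fst z) * (\<Prod>i<h. G (Suc i) (snd z ! i))) (v, ys) \<partial>count_space (configs h) \<partial>count_space UNIV)
       = integral\<^sup>N (count_space (UNIV::site set) \<Otimes>\<^sub>M count_space (configs h)) (\<lambda>z. G 0 (fst z) * (\<Prod>i<h. G (Suc i) (snd z ! i)))"
      by (rule nn_integral_fst) (simp add: pm)
    then show ?thesis by (simp add: pm)
  qed
  also have "\<dots> = (\<integral>\<^sup>+v. G 0 v * (\<Prod>i<h. \<integral>\<^sup>+w. G (Suc i) w \<partial>count_space UNIV) \<partial>count_space UNIV)"
    by (simp add: nn_integral_cmult Suc[of "\<lambda>i. G (Suc i)"])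
  also have "\<dots> = (\<integral>\<^sup>+v. G 0 v \<partial>count_space UNIV) * (\<Prod>i<h. \<integral>\<^sup>+w. G (Suc i) w \<partial>count_space UNIV)"
    by (simp add: nn_integral_multc)
  also have "\<dots> = (\<Prod>i<Suc h. \<integral>\<^sup>+v. G i v \<partial>count_space UNIV)"
    by (simp del: prod.lessThan_Suc add: prod.lessThan_Suc_shift)
  finally show ?case .
qed

lemma prod_split2:
  fixes f :: "nat \<Rightarrow> 'b::comm_monoid_mult"
  assumes "a < h" "b < h" "a \<noteq> b"
  shows "(\<Prod>i<h. f i) = f a * f b * (\<Prod>i\<in>{..<h} - {a, b}. f i)"
proof -
  have "(\<Prod>i<h. f i) = f a * (\<Prod>i\<in>{..<h} - {a}. f i)"
    using assms by (subst prod.remove[of _ a]) auto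
  also have "(\<Prod>i\<in>{..<h} - {a}. f i) = f b * (\<Prod>i\<in>{..<h} - {a} - {b}. f i)"
    using assms by (subst prod.remove[of _ b]) auto
  also have "{..<h} - {a} - {b} = {..<h} - {a, b}" by auto
  finally show ?thesis by (simp add: mult.assoc)
qed

lemma nn_constrained:
  fixes g :: "nat \<Rightarrow> site \<Rightarrow> ennreal"
  assumes ab: "a < h" "b < h" "a \<noteq> b"
  shows "(\<integral>\<^sup>+y. (if y ! a = y ! b then \<Prod>i<h. g i (y ! i) else 0) \<partial>count_space (configs h))
     \<le> (\<integral>\<^sup>+v. g a v * g b v \<partial>count_space UNIV) * (\<Prod>i\<in>{..<h} - {a, b}. \<integral>\<^sup>+v. g i v \<partial>count_space UNIV)"
proof -
  define C where "C = {y \<in> configs h. y ! a = y ! b}"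
  define D where "D = {y \<in> configs h. y ! b = 0}"
  define \<phi> where "\<phi> y = y[b := y ! a]" for y :: config
  define g' where "g' i v = (if i = a then g a v * g b v else if i = b then (if v = 0 then 1 else 0) else g i v)" for i v
  let ?F = "\<lambda>y. (if y ! a = y ! b then \<Prod>i<h. g i (y ! i) else 0)"
  have bij: "bij_betw \<phi> D C"
  proof -
    have "inj_on \<phi> D"
    proof (rule inj_onI)
      fix y1 y2 assume y: "y1 \<in> D" "y2 \<in> D" "\<phi> y1 = \<phi> y2"
      have "y1 = (\<phi> y1)[b := 0]" using y(1) by (simp add: \<phi>_def D_def) (metis list_update_id)
      also have "\<dots> = (\<phi> y2)[b := 0]" using y(3) by simp
      also have "\<dots> = y2" using y(2) by (simp add: \<phi>_def D_def) (metis list_update_id)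
      finally show "y1 = y2" .
    qed
    moreover have "\<phi> ` D = C"
    proof
      show "\<phi> ` D \<subseteq> C" using ab by (auto simp: \<phi>_def D_def C_def configs_def)
      show "C \<subseteq> \<phi> ` D"
      proof
        fix y assume y: "y \<in> C"
        then have "y[b := 0] \<in> D" "\<phi> (y[b := 0]) = y"
          using ab by (auto simp: \<phi>_def D_def C_def configs_def)
        then show "y \<in> \<phi> ` D" by (metis image_eqI)
      qed
    qed
    ultimately show ?thesis by (simp add: bij_betw_def)
  qed
  have "(\<integral>\<^sup>+y. ?F y \<partial>count_space (configs h)) = (\<integral>\<^sup>+y. ?F y \<partial>count_space C)"
    by (rule nn_count_restrict) (auto simp: C_def)
  also have "\<dots> = (\<integral>\<^sup>+y. ?F (\<phi> y) \<partial>count_space D)"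
    by (rule nn_integral_bij_count_space[OF bij, symmetric])
  also have "\<dots> = (\<integral>\<^sup>+y. (\<Prod>i<h. g' i (y ! i)) \<partial>count_space D)"
  proof (rule nn_integral_cong)
    fix y assume "y \<in> space (count_space D)"
    then have y: "y \<in> D" by simp
    then have len: "length y = h" "y ! b = 0" by (auto simp: D_def configs_def)
    have "\<phi> y ! a = \<phi> y ! b" using ab len by (simp add: \<phi>_def)
    then have "?F (\<phi> y) = (\<Prod>i<h. g i (\<phi> y ! i))" by simp
    also have "\<dots> = g a (\<phi> y ! a) * g b (\<phi> y ! b) * (\<Prod>i\<in>{..<h} - {a, b}. g i (\<phi> y ! i))"
      by (rule prod_split2[OF ab])
    also have "\<dots> = g' a (y ! a) * g' b (y ! b) * (\<Prod>i\<in>{..<h} - {a, b}. g' i (y ! i))"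
      using ab len by (auto simp: \<phi>_def g'_def intro!: prod.cong)
    also have "\<dots> = (\<Prod>i<h. g' i (y ! i))"
      by (rule prod_split2[OF ab, symmetric])
    finally show "?F (\<phi> y) = (\<Prod>i<h. g' i (y ! i))" .
  qed
  also have "\<dots> \<le> (\<integral>\<^sup>+y. (\<Prod>i<h. g' i (y ! i)) \<partial>count_space (configs h))"
    by (rule nn_count_mono) (auto simp: D_def)
  also have "\<dots> = (\<Prod>i<h. \<integral>\<^sup>+v. g' i v \<partial>count_space UNIV)"
    by (rule nn_prod_configs)
  also have "\<dots> = (\<integral>\<^sup>+v. g' a v \<partial>count_space UNIV) * (\<integral>\<^sup>+v. g' b v \<partial>count_space UNIV)
        * (\<Prod>i\<in>{..<h} - {a, b}. \<integral>\<^sup>+v. g' i v \<partial>count_space UNIV)"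
    by (rule prod_split2[OF ab])
  also have "(\<integral>\<^sup>+v. g' b v \<partial>count_space UNIV) = 1"
  proof -
    have "(\<integral>\<^sup>+v. g' b v \<partial>count_space UNIV) = (\<Sum>v\<in>{0}. g' b v)"
      using ab by (intro nn_integral_count_space') (auto simp: g'_def)
    then show ?thesis using ab by (simp add: g'_def)
  qed
  also have "(\<Prod>i\<in>{..<h} - {a, b}. \<integral>\<^sup>+v. g' i v \<partial>count_space UNIV) = (\<Prod>i\<in>{..<h} - {a, b}. \<integral>\<^sup>+v. g i v \<partial>count_space UNIV)"
    by (rule prod.cong) (auto simp: g'_def)
  also have "(\<integral>\<^sup>+v. g' a v \<partial>count_space UNIV) = (\<integral>\<^sup>+v. g a v * g b v \<partial>count_space UNIV)"
    by (simp add: g'_def)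
  finally show ?thesis by simp
qed

lemma prod_ennreal_le:
  assumes "finite A" "\<And>i. i \<in> A \<Longrightarrow> f i \<le> ennreal (c i)" "\<And>i. i \<in> A \<Longrightarrow> c i \<ge> 0"
  shows "prod f A \<le> ennreal (prod c A)"
  using assms
proof (induction A rule: finite_induct)
  case empty then show ?case by simp
next
  case (insert x F)
  have "prod f (insert x F) = f x * prod f F" using insert by simp
  also have "\<dots> \<le> ennreal (c x) * ennreal (prod c F)"
    using insert by (intro mult_mono) auto
  also have "\<dots> = ennreal (prod c (insert x F))"
    using insert by (simp add: ennreal_mult[symmetric] prod_nonneg)
  finally show ?case .
qed

lemma ennreal_half_mult: "B \<ge> 0 \<Longrightarrow> ennreal (1/2) * ennreal B = ennreal (1/2 * B)"
  by (rule ennreal_mult[symmetric]) simp_all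

lemma ennreal_half_le:
  fixes X A B :: real
  assumes "X \<le> 1/2 * A + 1/2 * B" "A \<ge> 0" "B \<ge> 0"
  shows "ennreal X \<le> ennreal (1/2) * ennreal A + ennreal (1/2) * ennreal B"
proof -
  have "ennreal (1/2) * ennreal A + ennreal (1/2) * ennreal B = ennreal (1/2 * A) + ennreal (1/2 * B)"
    using assms by (simp only: ennreal_half_mult)
  also have "\<dots> = ennreal (1/2 * A + 1/2 * B)"
    using assms by (intro ennreal_plus[symmetric]) simp_all
  finally show ?thesis using assms(1) by (simp add: ennreal_leI)
qed

lemma ennreal_half_double:
  fixes B :: real
  assumes "B \<ge> 0"
  shows "ennreal (1/2) * ennreal B + ennreal (1/2) * ennreal B = ennreal B"
proof -
  have "ennreal (1/2) * ennreal B + ennreal (1/2) * ennreal B = ennreal (1/2 * B) + ennreal (1/2 * B)"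
    using assms by (simp only: ennreal_half_mult)
  also have "\<dots> = ennreal (1/2 * B + 1/2 * B)"
    using assms by (intro ennreal_plus[symmetric]) simp_all
  finally show ?thesis by simp
qed

locale walkctx =
  fixes p :: "site pmf" and cc :: real
  assumes symm: "\<And>x. pmf p x = pmf p (- x)"
    and cc_ge1: "cc \<ge> 1"
    and cc1: "\<And>t' n a. t' \<ge> 0 \<Longrightarrow> n \<ge> 1 \<Longrightarrow> a \<in> {1,2} \<Longrightarrow>
        (\<lambda>x. exp (t' * coord a x) * qn p n x) summable_on UNIV \<and>
        (\<Sum>\<^sub>\<infinity>x. exp (t' * coord a x) * qn p n x) \<le> exp (cc * t'\<^sup>2 * real n / 2)"
    and cc2: "\<And>t' n a. t' \<ge> 0 \<Longrightarrow> n \<ge> 1 \<Longrightarrow> a \<in> {1,2} \<Longrightarrow>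
        (\<lambda>x. exp (t' * coord a x) * (qn p n x)\<^sup>2 / qn p (2 * n) 0) summable_on UNIV \<and>
        (\<Sum>\<^sub>\<infinity>x. exp (t' * coord a x) * (qn p n x)\<^sup>2 / qn p (2 * n) 0) \<le> exp (cc * t'\<^sup>2 * real n / 2)"
begin

lemma single_bound:
  assumes "d < 4" "n \<ge> 1" "\<theta> \<ge> 0"
  shows "(\<integral>\<^sup>+w. ennreal (exp (\<theta> * tilt d w) * qn p n w) \<partial>count_space UNIV) \<le> ennreal (exp (cc * \<theta>\<^sup>2 * real n / 2))"
  using tilt_sum_bound[of d "\<lambda>th w. qn p n w" \<theta> "exp (cc * \<theta>\<^sup>2 * real n / 2)"] assms cc1[of \<theta> n]
    qn_symm[OF symm] qn_nonneg by blast

lemma sq_bound: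
  assumes "d < 4" "n \<ge> 1" "\<theta> \<ge> 0"
  shows "(\<integral>\<^sup>+w. ennreal (exp (\<theta> * tilt d w) * (qn p n w)\<^sup>2) \<partial>count_space UNIV)
      \<le> ennreal (exp (cc * \<theta>\<^sup>2 * real n / 2) * qn p (2 * n) 0)"
proof -
  define Q where "Q = qn p (2 * n) 0"
  have Qp: "Q > 0" unfolding Q_def by (rule q2n_pos[OF symm])
  have b: "(\<integral>\<^sup>+w. ennreal (exp (\<theta> * tilt d w) * ((qn p n w)\<^sup>2 / Q)) \<partial>count_space UNIV) \<le> ennreal (exp (cc * \<theta>\<^sup>2 * real n / 2))"
  proof (rule tilt_sum_bound[of d "\<lambda>th w. (qn p n w)\<^sup>2 / Q"])
    show "\<And>a. a \<in> {1, 2} \<Longrightarrow>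
         (\<lambda>w. exp (\<theta> * coord a w) * ((qn p n w)\<^sup>2 / Q)) summable_on UNIV \<and>
         (\<Sum>\<^sub>\<infinity>w. exp (\<theta> * coord a w) * ((qn p n w)\<^sup>2 / Q)) \<le> exp (cc * \<theta>\<^sup>2 * real n / 2)"
      using cc2[of \<theta> n] assms by (simp add: Q_def)
  qed (use assms qn_symm[OF symm] Qp in auto)
  have "(\<integral>\<^sup>+w. ennreal (exp (\<theta> * tilt d w) * (qn p n w)\<^sup>2) \<partial>count_space UNIV)
      = (\<integral>\<^sup>+w. ennreal Q * ennreal (exp (\<theta> * tilt d w) * ((qn p n w)\<^sup>2 / Q)) \<partial>count_space UNIV)"
    using Qp by (intro nn_integral_cong) (simp add: ennreal_mult[symmetric])
  also have "\<dots> = ennreal Q * (\<integral>\<^sup>+w. ennreal (exp (\<theta> * tilt d w) * ((qn p n w)\<^sup>2 / Q)) \<partial>count_space UNIV)"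
    by (simp add: nn_integral_cmult)
  also have "\<dots> \<le> ennreal Q * ennreal (exp (cc * \<theta>\<^sup>2 * real n / 2))"
    by (intro mult_left_mono b) simp
  also have "\<dots> = ennreal (exp (cc * \<theta>\<^sup>2 * real n / 2) * Q)"
    using Qp by (simp add: ennreal_mult[symmetric] mult.commute)
  finally show ?thesis by (simp add: Q_def)
qed

lemma mixed_bound:
  assumes "d1 < 4" "d2 < 4" "n \<ge> 1" "T \<ge> 0"
  shows "(\<integral>\<^sup>+w. ennreal (exp (2 * T * tilt d1 w + 2 * T * tilt d2 w) * (qn p n w)\<^sup>2) \<partial>count_space UNIV)
      \<le> ennreal (exp (8 * cc * T\<^sup>2 * real n) * qn p (2 * n) 0)"
proof -
  define Q where "Q = qn p (2 * n) 0"
  have Qp: "Q > 0" unfolding Q_def by (rule q2n_pos[OF symm])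
  define B where "B = exp (cc * (4 * T)\<^sup>2 * real n / 2) * Q"
  have B: "B = exp (8 * cc * T\<^sup>2 * real n) * Q"
    unfolding B_def by (simp add: power2_eq_square algebra_simps)
  have pt: "ennreal (exp (2 * T * tilt d1 w + 2 * T * tilt d2 w) * (qn p n w)\<^sup>2)
     \<le> ennreal (1/2) * ennreal (exp ((4 * T) * tilt d1 w) * (qn p n w)\<^sup>2)
       + ennreal (1/2) * ennreal (exp ((4 * T) * tilt d2 w) * (qn p n w)\<^sup>2)" for w
  proof -
    define u where "u = exp (2 * T * tilt d1 w)"
    define v where "v = exp (2 * T * tilt d2 w)"
    have "exp (2 * T * tilt d1 w + 2 * T * tilt d2 w) = u * v" by (simp add: u_def v_def exp_add)
    moreover have "exp ((4 * T) * tilt d1 w) = u\<^sup>2" "exp ((4 * T) * tilt d2 w) = v\<^sup>2"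
      by (simp_all add: u_def v_def power2_eq_square exp_add[symmetric])
    moreover have uv: "u * v \<le> 1/2 * u\<^sup>2 + 1/2 * v\<^sup>2"
    proof -
      have "0 \<le> (u - v)\<^sup>2" by simp
      then show ?thesis by (simp add: power2_eq_square algebra_simps)
    qed
    moreover have "0 \<le> (qn p n w)\<^sup>2" by simp
    ultimately have "exp (2 * T * tilt d1 w + 2 * T * tilt d2 w) * (qn p n w)\<^sup>2
        \<le> (1/2 * u\<^sup>2 + 1/2 * v\<^sup>2) * (qn p n w)\<^sup>2"
      by (metis mult_right_mono)
    also have "\<dots> = 1/2 * (exp ((4 * T) * tilt d1 w) * (qn p n w)\<^sup>2) + 1/2 * (exp ((4 * T) * tilt d2 w) * (qn p n w)\<^sup>2)"
      using \<open>exp ((4 * T) * tilt d1 w) = u\<^sup>2\<close> \<open>exp ((4 * T) * tilt d2 w) = v\<^sup>2\<close>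
      by (simp add: algebra_simps)
    finally have "exp (2 * T * tilt d1 w + 2 * T * tilt d2 w) * (qn p n w)\<^sup>2
        \<le> 1/2 * (exp ((4 * T) * tilt d1 w) * (qn p n w)\<^sup>2) + 1/2 * (exp ((4 * T) * tilt d2 w) * (qn p n w)\<^sup>2)" .
    then show ?thesis by (rule ennreal_half_le) simp_all
  qed
  have "(\<integral>\<^sup>+w. ennreal (exp (2 * T * tilt d1 w + 2 * T * tilt d2 w) * (qn p n w)\<^sup>2) \<partial>count_space UNIV)
     \<le> (\<integral>\<^sup>+w. ennreal (1/2) * ennreal (exp ((4 * T) * tilt d1 w) * (qn p n w)\<^sup>2)
       + ennreal (1/2) * ennreal (exp ((4 * T) * tilt d2 w) * (qn p n w)\<^sup>2) \<partial>count_space UNIV)"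
    by (intro nn_integral_mono pt)
  also have "\<dots> = ennreal (1/2) * (\<integral>\<^sup>+w. ennreal (exp ((4 * T) * tilt d1 w) * (qn p n w)\<^sup>2) \<partial>count_space UNIV)
       + ennreal (1/2) * (\<integral>\<^sup>+w. ennreal (exp ((4 * T) * tilt d2 w) * (qn p n w)\<^sup>2) \<partial>count_space UNIV)"
    by (simp add: nn_integral_add nn_integral_cmult)
  also have "\<dots> \<le> ennreal (1/2) * ennreal B + ennreal (1/2) * ennreal B"
    using sq_bound[of d1 n "4 * T"] sq_bound[of d2 n "4 * T"] assms
    by (intro add_mono mult_left_mono) (auto simp: B_def Q_def)
  also have "\<dots> = ennreal B"
    using Qp by (intro ennreal_half_double) (simp add: B_def)
  finally show ?thesis by (simp add: B Q_def)
qed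

end

definition Etilt :: "real \<Rightarrow> (nat \<Rightarrow> nat) \<Rightarrow> nat \<Rightarrow> config \<Rightarrow> config \<Rightarrow> real" where
  "Etilt T \<Theta> h z x = (\<Prod>i<h. exp (2 * T * tilt (\<Theta> i) (x ! i - z ! i)))"

lemma Etilt_pos: "Etilt T \<Theta> h z x > 0"
  unfolding Etilt_def by (intro prod_pos) auto

lemma Etilt_mult: "Etilt T \<Theta> h z x = Etilt T \<Theta> h z y * Etilt T \<Theta> h y x"
  unfolding Etilt_def prod.distrib[symmetric] exp_add[symmetric]
  by (intro prod.cong refl arg_cong[where f=exp]) (simp add: tilt_diff algebra_simps)

context walkctx
begin

lemma step_core:
  fixes g :: "nat \<Rightarrow> site \<Rightarrow> ennreal"
  assumes ab: "a < h" "b < h" "a \<noteq> b" and n: "n \<ge> 1" and T: "T \<ge> 0"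
    and single: "\<And>i. i < h \<Longrightarrow> (\<integral>\<^sup>+v. g i v \<partial>count_space UNIV) \<le> ennreal (exp (2 * cc * T\<^sup>2 * real n))"
    and pair: "(\<integral>\<^sup>+v. g a v * g b v \<partial>count_space UNIV) \<le> ennreal (exp (8 * cc * T\<^sup>2 * real n) * qn p (2 * n) 0)"
  shows "(\<integral>\<^sup>+y. (if y ! a = y ! b then \<Prod>i<h. g i (y ! i) else 0) \<partial>count_space (configs h))
     \<le> ennreal (exp (4 * cc * T\<^sup>2 * real h * real n) * qn p (2 * n) 0)"
proof -
  define E where "E = exp (2 * cc * T\<^sup>2 * real n)"
  define Q where "Q = qn p (2 * n) 0"
  have Q0: "Q \<ge> 0" by (simp add: Q_def qn_nonneg)
  have card: "card ({..<h} - {a, b}) = h - 2"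
    using ab by (subst card_Diff_subset) auto
  have "(\<integral>\<^sup>+y. (if y ! a = y ! b then \<Prod>i<h. g i (y ! i) else 0) \<partial>count_space (configs h))
     \<le> (\<integral>\<^sup>+v. g a v * g b v \<partial>count_space UNIV) * (\<Prod>i\<in>{..<h} - {a, b}. \<integral>\<^sup>+v. g i v \<partial>count_space UNIV)"
    by (rule nn_constrained[OF ab])
  also have "\<dots> \<le> ennreal (exp (8 * cc * T\<^sup>2 * real n) * Q) * ennreal (\<Prod>i\<in>{..<h} - {a, b}. E)"
    using pair single by (intro mult_mono prod_ennreal_le) (auto simp: E_def Q_def)
  also have "\<dots> = ennreal (exp (8 * cc * T\<^sup>2 * real n) * Q * E ^ (h - 2))"
    using Q0 by (simp add: card E_def ennreal_mult[symmetric])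
  also have "exp (8 * cc * T\<^sup>2 * real n) * Q * E ^ (h - 2) = exp ((8 + 2 * real (h - 2)) * cc * T\<^sup>2 * real n) * Q"
    unfolding E_def by (simp add: exp_of_nat_mult[symmetric] exp_add[symmetric] algebra_simps)
  also have "\<dots> \<le> exp (4 * cc * T\<^sup>2 * real h * real n) * Q"
  proof (intro mult_right_mono Q0)
    have "h \<ge> 2" using ab by linarith
    then have "(8 + 2 * real (h - 2)) \<le> 4 * real h" by (simp add: of_nat_diff)
    moreover have "cc * T\<^sup>2 * real n \<ge> 0" using cc_ge1 by simp
    ultimately have "(8 + 2 * real (h - 2)) * (cc * T\<^sup>2 * real n) \<le> 4 * real h * (cc * T\<^sup>2 * real n)"
      by (rule mult_right_mono)
    then show "exp ((8 + 2 * real (h - 2)) * cc * T\<^sup>2 * real n) \<le> exp (4 * cc * T\<^sup>2 * real h * real n)"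
      by (simp add: algebra_simps)
  qed
  finally show ?thesis by (simp add: Q_def ennreal_leI)
qed

lemma step_row:
  assumes ab: "a < h" "b < h" "a \<noteq> b" and n: "n \<ge> 1" and T: "T \<ge> 0"
    and simab: "\<And>y. sim y I \<Longrightarrow> y ! a = y ! b"
    and Th: "\<And>i. i < h \<Longrightarrow> \<Theta> i < 4"
  shows "(\<integral>\<^sup>+x. ennreal (Etilt T \<Theta> h z x * QII p h I n z x) \<partial>count_space (configs h))
     \<le> ennreal (exp (4 * cc * T\<^sup>2 * real h * real n) * qn p (2 * n) 0)"
proof (cases "sim z I")
  case False
  then show ?thesis by (simp add: QII_def)
next
  case True
  then have zab: "z ! a = z ! b" by (rule simab)
  define g where "g i v = ennreal (exp (2 * T * tilt (\<Theta> i) (v - z ! i)) * qn p n (v - z ! i))" for i v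
  have "(\<integral>\<^sup>+x. ennreal (Etilt T \<Theta> h z x * QII p h I n z x) \<partial>count_space (configs h))
     \<le> (\<integral>\<^sup>+x. (if x ! a = x ! b then \<Prod>i<h. g i (x ! i) else 0) \<partial>count_space (configs h))"
  proof (intro nn_integral_mono)
    fix x
    show "ennreal (Etilt T \<Theta> h z x * QII p h I n z x) \<le> (if x ! a = x ! b then \<Prod>i<h. g i (x ! i) else 0)"
    proof (cases "sim x I")
      case False then show ?thesis by (simp add: QII_def)
    next
      case sx: True
      then have "x ! a = x ! b" by (rule simab)
      moreover have "ennreal (Etilt T \<Theta> h z x * QII p h I n z x) = (\<Prod>i<h. g i (x ! i))"
        using True sx unfolding g_def Etilt_def QII_def
        by (simp add: prod.distrib[symmetric] prod_ennreal qn_nonneg)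
      ultimately show ?thesis by simp
    qed
  qed
  also have "\<dots> \<le> ennreal (exp (4 * cc * T\<^sup>2 * real h * real n) * qn p (2 * n) 0)"
  proof (rule step_core[OF ab n T])
    fix i assume i: "i < h"
    have "(\<integral>\<^sup>+v. g i v \<partial>count_space UNIV) = (\<integral>\<^sup>+w. ennreal (exp (2 * T * tilt (\<Theta> i) w) * qn p n w) \<partial>count_space UNIV)"
      unfolding g_def by (rule nn_shift)
    also have "\<dots> \<le> ennreal (exp (cc * (2 * T)\<^sup>2 * real n / 2))"
      using single_bound[of "\<Theta> i" n "2 * T"] Th[OF i] n T by simp
    also have "cc * (2 * T)\<^sup>2 * real n / 2 = 2 * cc * T\<^sup>2 * real n" by (simp add: power2_eq_square)
    finally show "(\<integral>\<^sup>+v. g i v \<partial>count_space UNIV) \<le> ennreal (exp (2 * cc * T\<^sup>2 * real n))" .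
  next
    have "(\<integral>\<^sup>+v. g a v * g b v \<partial>count_space UNIV)
        = (\<integral>\<^sup>+v. (\<lambda>w. ennreal (exp (2 * T * tilt (\<Theta> a) w + 2 * T * tilt (\<Theta> b) w) * (qn p n w)\<^sup>2)) (v - z ! a) \<partial>count_space UNIV)"
      unfolding g_def using zab qn_nonneg
      by (intro nn_integral_cong) (simp add: ennreal_mult[symmetric] exp_add power2_eq_square algebra_simps)
    also have "\<dots> = (\<integral>\<^sup>+w. ennreal (exp (2 * T * tilt (\<Theta> a) w + 2 * T * tilt (\<Theta> b) w) * (qn p n w)\<^sup>2) \<partial>count_space UNIV)"
      by (rule nn_shift)
    also have "\<dots> \<le> ennreal (exp (8 * cc * T\<^sup>2 * real n) * qn p (2 * n) 0)"
      using mixed_bound[of "\<Theta> a" "\<Theta> b" n T] Th ab n T by simp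
    finally show "(\<integral>\<^sup>+v. g a v * g b v \<partial>count_space UNIV) \<le> ennreal (exp (8 * cc * T\<^sup>2 * real n) * qn p (2 * n) 0)" .
  qed
  finally show ?thesis .
qed

lemma step_col:
  assumes ab: "a < h" "b < h" "a \<noteq> b" and n: "n \<ge> 1" and T: "T \<ge> 0"
    and simab: "\<And>y. sim y I \<Longrightarrow> y ! a = y ! b"
    and Th: "\<And>i. i < h \<Longrightarrow> \<Theta> i < 4"
  shows "(\<integral>\<^sup>+z. ennreal (Etilt T \<Theta> h z x * QII p h I n z x) \<partial>count_space (configs h))
     \<le> ennreal (exp (4 * cc * T\<^sup>2 * real h * real n) * qn p (2 * n) 0)"
proof (cases "sim x I")
  case False
  then show ?thesis by (simp add: QII_def)
next
  case True
  then have xab: "x ! a = x ! b" by (rule simab)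
  define g where "g i v = ennreal (exp (2 * T * tilt (\<Theta> i) (x ! i - v)) * qn p n (x ! i - v))" for i v
  have "(\<integral>\<^sup>+z. ennreal (Etilt T \<Theta> h z x * QII p h I n z x) \<partial>count_space (configs h))
     \<le> (\<integral>\<^sup>+z. (if z ! a = z ! b then \<Prod>i<h. g i (z ! i) else 0) \<partial>count_space (configs h))"
  proof (intro nn_integral_mono)
    fix z
    show "ennreal (Etilt T \<Theta> h z x * QII p h I n z x) \<le> (if z ! a = z ! b then \<Prod>i<h. g i (z ! i) else 0)"
    proof (cases "sim z I")
      case False then show ?thesis by (simp add: QII_def)
    next
      case sz: True
      then have "z ! a = z ! b" by (rule simab)
      moreover have "ennreal (Etilt T \<Theta> h z x * QII p h I n z x) = (\<Prod>i<h. g i (z ! i))"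
        using True sz unfolding g_def Etilt_def QII_def
        by (simp add: prod.distrib[symmetric] prod_ennreal qn_nonneg)
      ultimately show ?thesis by simp
    qed
  qed
  also have "\<dots> \<le> ennreal (exp (4 * cc * T\<^sup>2 * real h * real n) * qn p (2 * n) 0)"
  proof (rule step_core[OF ab n T])
    fix i assume i: "i < h"
    have "(\<integral>\<^sup>+v. g i v \<partial>count_space UNIV) = (\<integral>\<^sup>+w. ennreal (exp (2 * T * tilt (\<Theta> i) w) * qn p n w) \<partial>count_space UNIV)"
      unfolding g_def by (rule nn_shift')
    also have "\<dots> \<le> ennreal (exp (cc * (2 * T)\<^sup>2 * real n / 2))"
      using single_bound[of "\<Theta> i" n "2 * T"] Th[OF i] n T by simp
    also have "cc * (2 * T)\<^sup>2 * real n / 2 = 2 * cc * T\<^sup>2 * real n" by (simp add: power2_eq_square)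
    finally show "(\<integral>\<^sup>+v. g i v \<partial>count_space UNIV) \<le> ennreal (exp (2 * cc * T\<^sup>2 * real n))" .
  next
    have "(\<integral>\<^sup>+v. g a v * g b v \<partial>count_space UNIV)
        = (\<integral>\<^sup>+v. (\<lambda>w. ennreal (exp (2 * T * tilt (\<Theta> a) w + 2 * T * tilt (\<Theta> b) w) * (qn p n w)\<^sup>2)) (x ! a - v) \<partial>count_space UNIV)"
      unfolding g_def using xab qn_nonneg
      by (intro nn_integral_cong) (simp add: ennreal_mult[symmetric] exp_add power2_eq_square algebra_simps)
    also have "\<dots> = (\<integral>\<^sup>+w. ennreal (exp (2 * T * tilt (\<Theta> a) w + 2 * T * tilt (\<Theta> b) w) * (qn p n w)\<^sup>2) \<partial>count_space UNIV)"
      by (rule nn_shift')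
    also have "\<dots> \<le> ennreal (exp (8 * cc * T\<^sup>2 * real n) * qn p (2 * n) 0)"
      using mixed_bound[of "\<Theta> a" "\<Theta> b" n T] Th ab n T by simp
    finally show "(\<integral>\<^sup>+v. g a v * g b v \<partial>count_space UNIV) \<le> ennreal (exp (8 * cc * T\<^sup>2 * real n) * qn p (2 * n) 0)" .
  qed
  finally show ?thesis .
qed

end

primrec Pc :: "site pmf \<Rightarrow> nat \<Rightarrow> nat \<Rightarrow> real" where
  "Pc p 0 m = 0"
| "Pc p (Suc k) m = (if k = 0 then (if m \<ge> 1 then qn p (2 * m) 0 else 0)
      else (\<Sum>n\<in>{1..<m}. Pc p k n * qn p (2 * (m - n)) 0))"

lemma Pc_nonneg: "Pc p k m \<ge> 0"
  by (induction k arbitrary: m) (auto simp: qn_nonneg intro!: sum_nonneg mult_nonneg_nonneg)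

lemma QII_nonneg: "QII p h I n z x \<ge> 0"
  by (simp add: QII_def qn_nonneg prod_nonneg)

lemma Uchain_nonneg: "Uchain p h I k m z x \<ge> 0"
proof (induction k arbitrary: m z x)
  case 0 then show ?case by simp
next
  case (Suc k) then show ?case
    by (auto simp: QII_nonneg intro!: sum_nonneg infsum_nonneg mult_nonneg_nonneg)
qed

lemma Uchain_zero: "k > m \<Longrightarrow> Uchain p h I k m z x = 0"
proof (induction k arbitrary: m z x)
  case 0 then show ?case by simp
next
  case (Suc k)
  show ?case
  proof (cases "k = 0")
    case True then show ?thesis using Suc.prems by simp
  next
    case False
    have "Uchain p h I k n z y = 0" if "n \<in> {1..<m}" for n y
      using Suc.IH[of n] that Suc.prems by auto
    then show ?thesis using False by simp
  qed
qed

lemma U_unfold: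
  assumes "k \<noteq> 0" "c \<ge> 0"
  shows "ennreal (c * Uchain p h I (Suc k) m z x)
    \<le> (\<Sum>n\<in>{1..<m}. \<integral>\<^sup>+y. ennreal (c * Uchain p h I k n z y * QII p h I (m - n) y x) \<partial>count_space (configs h))"
proof -
  have "c * Uchain p h I (Suc k) m z x = (\<Sum>n\<in>{1..<m}. infsum (\<lambda>y. c * Uchain p h I k n z y * QII p h I (m - n) y x) (configs h))"
    using assms by (simp add: sum_distrib_left infsum_cmult_right'[symmetric] mult.assoc)
  then have "ennreal (c * Uchain p h I (Suc k) m z x) = (\<Sum>n\<in>{1..<m}. ennreal (infsum (\<lambda>y. c * Uchain p h I k n z y * QII p h I (m - n) y x) (configs h)))"
    using assms by (simp add: sum_ennreal infsum_nonneg Uchain_nonneg QII_nonneg)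
  also have "\<dots> \<le> (\<Sum>n\<in>{1..<m}. \<integral>\<^sup>+y. ennreal (c * Uchain p h I k n z y * QII p h I (m - n) y x) \<partial>count_space (configs h))"
    using assms by (intro sum_mono nn_infsum_le) (simp add: Uchain_nonneg QII_nonneg)
  finally show ?thesis .
qed

context walkctx
begin

lemma chain_row:
  assumes ab: "a < h" "b < h" "a \<noteq> b" and T: "T \<ge> 0"
    and simab: "\<And>y. sim y I \<Longrightarrow> y ! a = y ! b"
    and Th: "\<And>i. i < h \<Longrightarrow> \<Theta> i < 4"
  shows "(\<integral>\<^sup>+x. ennreal (Etilt T \<Theta> h z x * Uchain p h I k m z x) \<partial>count_space (configs h))
     \<le> ennreal (exp (4 * cc * T\<^sup>2 * real h * real m) * Pc p k m)"
proof (induction k arbitrary: m z)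
  case 0 then show ?case by simp
next
  case (Suc k)
  show ?case
  proof (cases "k = 0")
    case True
    show ?thesis
    proof (cases "m \<ge> 1")
      case True
      with \<open>k = 0\<close> show ?thesis using step_row[OF ab True T simab Th, where z=z] by simp
    next
      case False with \<open>k = 0\<close> show ?thesis by simp
    qed
  next
    case False
    let ?G = "4 * cc * T\<^sup>2 * real h"
    let ?E = "Etilt T \<Theta> h"
    have "(\<integral>\<^sup>+x. ennreal (?E z x * Uchain p h I (Suc k) m z x) \<partial>count_space (configs h))
      \<le> (\<integral>\<^sup>+x. (\<Sum>n\<in>{1..<m}. \<integral>\<^sup>+y. ennreal (?E z x * Uchain p h I k n z y * QII p h I (m - n) y x) \<partial>count_space (configs h)) \<partial>count_space (configs h))"
      using False by (intro nn_integral_mono U_unfold) (auto intro: less_imp_le Etilt_pos)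
    also have "\<dots> = (\<Sum>n\<in>{1..<m}. \<integral>\<^sup>+x. \<integral>\<^sup>+y. ennreal (?E z x * Uchain p h I k n z y * QII p h I (m - n) y x) \<partial>count_space (configs h) \<partial>count_space (configs h))"
      by (rule nn_integral_sum) simp
    also have "\<dots> = (\<Sum>n\<in>{1..<m}. \<integral>\<^sup>+y. \<integral>\<^sup>+x. ennreal (?E z x * Uchain p h I k n z y * QII p h I (m - n) y x) \<partial>count_space (configs h) \<partial>count_space (configs h))"
      by (intro sum.cong refl nn_integral_count_space_nn_integral countable_configs) simp
    also have "\<dots> = (\<Sum>n\<in>{1..<m}. \<integral>\<^sup>+y. ennreal (?E z y * Uchain p h I k n z y) * (\<integral>\<^sup>+x. ennreal (?E y x * QII p h I (m - n) y x) \<partial>count_space (configs h)) \<partial>count_space (configs h))"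
    proof (intro sum.cong refl nn_integral_cong)
      fix n y
      have "(\<integral>\<^sup>+x. ennreal (?E z x * Uchain p h I k n z y * QII p h I (m - n) y x) \<partial>count_space (configs h))
          = (\<integral>\<^sup>+x. ennreal (?E z y * Uchain p h I k n z y) * ennreal (?E y x * QII p h I (m - n) y x) \<partial>count_space (configs h))"
      proof (intro nn_integral_cong)
        fix x
        have e: "?E z x = ?E z y * ?E y x" by (rule Etilt_mult)
        have "?E z x * Uchain p h I k n z y * QII p h I (m - n) y x = (?E z y * Uchain p h I k n z y) * (?E y x * QII p h I (m - n) y x)"
          unfolding e by (simp add: mult_ac)
        then show "ennreal (?E z x * Uchain p h I k n z y * QII p h I (m - n) y x) = ennreal (?E z y * Uchain p h I k n z y) * ennreal (?E y x * QII p h I (m - n) y x)"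
          by (simp add: ennreal_mult[symmetric] Uchain_nonneg QII_nonneg less_imp_le[OF Etilt_pos])
      qed
      also have "\<dots> = ennreal (?E z y * Uchain p h I k n z y) * (\<integral>\<^sup>+x. ennreal (?E y x * QII p h I (m - n) y x) \<partial>count_space (configs h))"
        by (rule nn_integral_cmult) simp
      finally show "(\<integral>\<^sup>+x. ennreal (?E z x * Uchain p h I k n z y * QII p h I (m - n) y x) \<partial>count_space (configs h))
          = ennreal (?E z y * Uchain p h I k n z y) * (\<integral>\<^sup>+x. ennreal (?E y x * QII p h I (m - n) y x) \<partial>count_space (configs h))" .
    qed
    also have "\<dots> \<le> (\<Sum>n\<in>{1..<m}. \<integral>\<^sup>+y. ennreal (?E z y * Uchain p h I k n z y) * ennreal (exp (?G * real (m - n)) * qn p (2 * (m - n)) 0) \<partial>count_space (configs h))"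
    proof (intro sum_mono nn_integral_mono mult_left_mono)
      fix n y assume "n \<in> {1..<m}"
      then have "m - n \<ge> 1" by auto
      then show "(\<integral>\<^sup>+x. ennreal (?E y x * QII p h I (m - n) y x) \<partial>count_space (configs h)) \<le> ennreal (exp (?G * real (m - n)) * qn p (2 * (m - n)) 0)"
        using step_row[where a=a and b=b and h=h and n="m - n" and T=T and I=I and \<Theta>=\<Theta> and z=y, OF ab _ T simab Th] by (simp add: mult_ac)
    qed simp
    also have "\<dots> = (\<Sum>n\<in>{1..<m}. (\<integral>\<^sup>+y. ennreal (?E z y * Uchain p h I k n z y) \<partial>count_space (configs h)) * ennreal (exp (?G * real (m - n)) * qn p (2 * (m - n)) 0))"
      by (intro sum.cong refl nn_integral_multc) simp
    also have "\<dots> \<le> (\<Sum>n\<in>{1..<m}. ennreal (exp (?G * real n) * Pc p k n) * ennreal (exp (?G * real (m - n)) * qn p (2 * (m - n)) 0))"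
      by (intro sum_mono mult_right_mono Suc.IH) simp
    also have "\<dots> = ennreal (\<Sum>n\<in>{1..<m}. exp (?G * real n) * Pc p k n * (exp (?G * real (m - n)) * qn p (2 * (m - n)) 0))"
      by (subst sum_ennreal[symmetric]) (auto simp: ennreal_mult[symmetric] Pc_nonneg qn_nonneg intro!: sum.cong)
    also have "(\<Sum>n\<in>{1..<m}. exp (?G * real n) * Pc p k n * (exp (?G * real (m - n)) * qn p (2 * (m - n)) 0))
        = exp (?G * real m) * Pc p (Suc k) m"
    proof -
      have "exp (?G * real n) * Pc p k n * (exp (?G * real (m - n)) * qn p (2 * (m - n)) 0)
          = exp (?G * real m) * (Pc p k n * qn p (2 * (m - n)) 0)" if "n \<in> {1..<m}" for n
      proof -
        have "exp (?G * real n) * exp (?G * real (m - n)) = exp (?G * real m)"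
          using that by (simp add: exp_add[symmetric] of_nat_diff algebra_simps)
        then show ?thesis by (metis (no_types, lifting) mult.assoc mult.commute mult.left_commute)
      qed
      then have "(\<Sum>n\<in>{1..<m}. exp (?G * real n) * Pc p k n * (exp (?G * real (m - n)) * qn p (2 * (m - n)) 0))
          = (\<Sum>n\<in>{1..<m}. exp (?G * real m) * (Pc p k n * qn p (2 * (m - n)) 0))"
        by (rule sum.cong[OF refl])
      then show ?thesis using False by (simp only: sum_distrib_left[symmetric] Pc.simps if_False)
    qed
    finally show ?thesis .
  qed
qed

lemma chain_col:
  assumes ab: "a < h" "b < h" "a \<noteq> b" and T: "T \<ge> 0"
    and simab: "\<And>y. sim y I \<Longrightarrow> y ! a = y ! b"
    and Th: "\<And>i. i < h \<Longrightarrow> \<Theta> i < 4"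
  shows "(\<integral>\<^sup>+z. ennreal (Etilt T \<Theta> h z x * Uchain p h I k m z x) \<partial>count_space (configs h))
     \<le> ennreal (exp (4 * cc * T\<^sup>2 * real h * real m) * Pc p k m)"
proof (induction k arbitrary: m x)
  case 0 then show ?case by simp
next
  case (Suc k)
  show ?case
  proof (cases "k = 0")
    case True
    show ?thesis
    proof (cases "m \<ge> 1")
      case True
      with \<open>k = 0\<close> show ?thesis
        using step_col[where a=a and b=b and h=h and n=m and T=T and I=I and \<Theta>=\<Theta> and x=x, OF ab True T simab Th] by simp
    next
      case False with \<open>k = 0\<close> show ?thesis by simp
    qed
  next
    case False
    let ?G = "4 * cc * T\<^sup>2 * real h"
    let ?E = "Etilt T \<Theta> h"
    have "(\<integral>\<^sup>+z. ennreal (?E z x * Uchain p h I (Suc k) m z x) \<partial>count_space (configs h))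
      \<le> (\<integral>\<^sup>+z. (\<Sum>n\<in>{1..<m}. \<integral>\<^sup>+y. ennreal (?E z x * Uchain p h I k n z y * QII p h I (m - n) y x) \<partial>count_space (configs h)) \<partial>count_space (configs h))"
      using False by (intro nn_integral_mono U_unfold) (auto intro: less_imp_le Etilt_pos)
    also have "\<dots> = (\<Sum>n\<in>{1..<m}. \<integral>\<^sup>+z. \<integral>\<^sup>+y. ennreal (?E z x * Uchain p h I k n z y * QII p h I (m - n) y x) \<partial>count_space (configs h) \<partial>count_space (configs h))"
      by (rule nn_integral_sum) simp
    also have "\<dots> = (\<Sum>n\<in>{1..<m}. \<integral>\<^sup>+y. \<integral>\<^sup>+z. ennreal (?E z x * Uchain p h I k n z y * QII p h I (m - n) y x) \<partial>count_space (configs h) \<partial>count_space (configs h))"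
      by (intro sum.cong refl nn_integral_count_space_nn_integral countable_configs) simp
    also have "\<dots> = (\<Sum>n\<in>{1..<m}. \<integral>\<^sup>+y. (\<integral>\<^sup>+z. ennreal (?E z y * Uchain p h I k n z y) \<partial>count_space (configs h)) * ennreal (?E y x * QII p h I (m - n) y x) \<partial>count_space (configs h))"
    proof (intro sum.cong refl nn_integral_cong)
      fix n y
      have "(\<integral>\<^sup>+z. ennreal (?E z x * Uchain p h I k n z y * QII p h I (m - n) y x) \<partial>count_space (configs h))
          = (\<integral>\<^sup>+z. ennreal (?E z y * Uchain p h I k n z y) * ennreal (?E y x * QII p h I (m - n) y x) \<partial>count_space (configs h))"
      proof (intro nn_integral_cong)
        fix z
        have e: "?E z x = ?E z y * ?E y x" by (rule Etilt_mult)
        have "?E z x * Uchain p h I k n z y * QII p h I (m - n) y x = (?E z y * Uchain p h I k n z y) * (?E y x * QII p h I (m - n) y x)"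
          unfolding e by (simp add: mult_ac)
        then show "ennreal (?E z x * Uchain p h I k n z y * QII p h I (m - n) y x) = ennreal (?E z y * Uchain p h I k n z y) * ennreal (?E y x * QII p h I (m - n) y x)"
          by (simp add: ennreal_mult[symmetric] Uchain_nonneg QII_nonneg less_imp_le[OF Etilt_pos])
      qed
      also have "\<dots> = (\<integral>\<^sup>+z. ennreal (?E z y * Uchain p h I k n z y) \<partial>count_space (configs h)) * ennreal (?E y x * QII p h I (m - n) y x)"
        by (rule nn_integral_multc) simp
      finally show "(\<integral>\<^sup>+z. ennreal (?E z x * Uchain p h I k n z y * QII p h I (m - n) y x) \<partial>count_space (configs h))
          = (\<integral>\<^sup>+z. ennreal (?E z y * Uchain p h I k n z y) \<partial>count_space (configs h)) * ennreal (?E y x * QII p h I (m - n) y x)" .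
    qed
    also have "\<dots> \<le> (\<Sum>n\<in>{1..<m}. \<integral>\<^sup>+y. ennreal (exp (?G * real n) * Pc p k n) * ennreal (?E y x * QII p h I (m - n) y x) \<partial>count_space (configs h))"
      by (intro sum_mono nn_integral_mono mult_right_mono Suc.IH) simp
    also have "\<dots> = (\<Sum>n\<in>{1..<m}. ennreal (exp (?G * real n) * Pc p k n) * (\<integral>\<^sup>+y. ennreal (?E y x * QII p h I (m - n) y x) \<partial>count_space (configs h)))"
      by (intro sum.cong refl nn_integral_cmult) simp
    also have "\<dots> \<le> (\<Sum>n\<in>{1..<m}. ennreal (exp (?G * real n) * Pc p k n) * ennreal (exp (?G * real (m - n)) * qn p (2 * (m - n)) 0))"
    proof (intro sum_mono mult_left_mono)
      fix n assume "n \<in> {1..<m}"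
      then have "m - n \<ge> 1" by auto
      then show "(\<integral>\<^sup>+y. ennreal (?E y x * QII p h I (m - n) y x) \<partial>count_space (configs h)) \<le> ennreal (exp (?G * real (m - n)) * qn p (2 * (m - n)) 0)"
        using step_col[where a=a and b=b and h=h and n="m - n" and T=T and I=I and \<Theta>=\<Theta> and x=x, OF ab _ T simab Th] by (simp add: mult_ac)
    qed simp
    also have "\<dots> = ennreal (\<Sum>n\<in>{1..<m}. exp (?G * real n) * Pc p k n * (exp (?G * real (m - n)) * qn p (2 * (m - n)) 0))"
      by (subst sum_ennreal[symmetric]) (auto simp: ennreal_mult[symmetric] Pc_nonneg qn_nonneg intro!: sum.cong)
    also have "(\<Sum>n\<in>{1..<m}. exp (?G * real n) * Pc p k n * (exp (?G * real (m - n)) * qn p (2 * (m - n)) 0))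
        = exp (?G * real m) * Pc p (Suc k) m"
    proof -
      have "exp (?G * real n) * Pc p k n * (exp (?G * real (m - n)) * qn p (2 * (m - n)) 0)
          = exp (?G * real m) * (Pc p k n * qn p (2 * (m - n)) 0)" if "n \<in> {1..<m}" for n
      proof -
        have "exp (?G * real n) * exp (?G * real (m - n)) = exp (?G * real m)"
          using that by (simp add: exp_add[symmetric] of_nat_diff algebra_simps)
        then show ?thesis by (metis (no_types, lifting) mult.assoc mult.commute mult.left_commute)
      qed
      then have "(\<Sum>n\<in>{1..<m}. exp (?G * real n) * Pc p k n * (exp (?G * real (m - n)) * qn p (2 * (m - n)) 0))
          = (\<Sum>n\<in>{1..<m}. exp (?G * real m) * (Pc p k n * qn p (2 * (m - n)) 0))"
        by (rule sum.cong[OF refl])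
      then show ?thesis using False by (simp only: sum_distrib_left[symmetric] Pc.simps if_False)
    qed
    finally show ?thesis .
  qed
qed

end

lemma conv_le:
  fixes a b :: "nat \<Rightarrow> real"
  assumes a0: "\<And>n. a n \<ge> 0" and b0: "\<And>n. b n \<ge> 0"
  shows "(\<Sum>m=1..L. \<Sum>n\<in>{1..<m}. a n * b (m - n)) \<le> (\<Sum>n=1..L. a n) * (\<Sum>d=1..L. b d)"
proof -
  have "(\<Sum>m=1..L. \<Sum>n\<in>{1..<m}. a n * b (m - n)) = (\<Sum>m\<in>{1..L}. \<Sum>n\<in>{n\<in>{1..L}. n < m}. a n * b (m - n))"
    by (intro sum.cong refl) auto
  also have "\<dots> = (\<Sum>n\<in>{1..L}. \<Sum>m\<in>{m\<in>{1..L}. n < m}. a n * b (m - n))"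
    by (rule sum.swap_restrict) auto
  also have "\<dots> \<le> (\<Sum>n\<in>{1..L}. a n * (\<Sum>d=1..L. b d))"
  proof (intro sum_mono)
    fix n assume n: "n \<in> {1..L}"
    have "(\<Sum>m\<in>{m\<in>{1..L}. n < m}. a n * b (m - n)) = a n * (\<Sum>m\<in>{m\<in>{1..L}. n < m}. b (m - n))"
      by (simp add: sum_distrib_left)
    also have "(\<Sum>m\<in>{m\<in>{1..L}. n < m}. b (m - n)) = (\<Sum>d\<in>(\<lambda>m. m - n) ` {m\<in>{1..L}. n < m}. b d)"
      by (subst sum.reindex) (auto simp: inj_on_def)
    also have "\<dots> \<le> (\<Sum>d=1..L. b d)"
      using b0 by (intro sum_mono2) auto
    finally show "(\<Sum>m\<in>{m\<in>{1..L}. n < m}. a n * b (m - n)) \<le> a n * (\<Sum>d=1..L. b d)"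
      using a0[of n] by (metis mult_left_mono order_refl order_trans)
  qed
  also have "\<dots> = (\<Sum>n=1..L. a n) * (\<Sum>d=1..L. b d)"
    by (simp add: sum_distrib_right)
  finally show ?thesis .
qed

lemma RL_nonneg: "RL p L lam \<ge> 0"
  unfolding RL_def by (intro sum_nonneg) (simp add: qn_nonneg)

lemma P_sum:
  assumes "k \<ge> 1"
  shows "(\<Sum>m=1..L. exp (- lam * real m) * Pc p k m) \<le> RL p L lam ^ k"
  using assms
proof (induction k)
  case 0 then show ?case by simp
next
  case (Suc k)
  show ?case
  proof (cases "k = 0")
    case True
    then show ?thesis by (simp add: RL_def)
  next
    case False
    then have k1: "k \<ge> 1" by simp
    have "(\<Sum>m=1..L. exp (- lam * real m) * Pc p (Suc k) m)
        = (\<Sum>m=1..L. \<Sum>n\<in>{1..<m}. (exp (- lam * real n) * Pc p k n) * (exp (- lam * real (m - n)) * qn p (2 * (m - n)) 0))"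
    proof (intro sum.cong refl)
      fix m assume "m \<in> {1..L}"
      have "exp (- lam * real n) * exp (- lam * real (m - n)) = exp (- lam * real m)" if "n \<in> {1..<m}" for n
        using that by (simp add: exp_add[symmetric] of_nat_diff algebra_simps)
      then have "(\<Sum>n\<in>{1..<m}. (exp (- lam * real n) * Pc p k n) * (exp (- lam * real (m - n)) * qn p (2 * (m - n)) 0))
          = (\<Sum>n\<in>{1..<m}. exp (- lam * real m) * (Pc p k n * qn p (2 * (m - n)) 0))"
        by (intro sum.cong refl) (metis (no_types, lifting) mult.assoc mult.commute mult.left_commute)
      then show "exp (- lam * real m) * Pc p (Suc k) m
          = (\<Sum>n\<in>{1..<m}. (exp (- lam * real n) * Pc p k n) * (exp (- lam * real (m - n)) * qn p (2 * (m - n)) 0))"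
        using False by (simp only: sum_distrib_left Pc.simps if_False)
    qed
    also have "\<dots> \<le> (\<Sum>n=1..L. exp (- lam * real n) * Pc p k n) * (\<Sum>d=1..L. exp (- lam * real d) * qn p (2 * d) 0)"
      by (rule conv_le) (simp_all add: Pc_nonneg qn_nonneg)
    also have "\<dots> \<le> RL p L lam ^ k * RL p L lam"
      using Suc.IH[OF k1] unfolding RL_def[symmetric]
      by (intro mult_right_mono RL_nonneg) auto
    finally show ?thesis by (simp add: mult.commute)
  qed
qed

lemma geom_le:
  fixes x :: real assumes "0 \<le> x" "x < 1"
  shows "(\<Sum>k=1..L. x ^ k) \<le> x / (1 - x)"
proof -
  have "(1 - x) * (\<Sum>k=1..L. x ^ k) = x - x ^ (Suc L)"
  proof (induction L)
    case 0 then show ?case by simp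
  next
    case (Suc L)
    have "(1 - x) * (\<Sum>k=1..Suc L. x ^ k) = (1 - x) * (\<Sum>k=1..L. x ^ k) + (1 - x) * x ^ Suc L"
      by (simp add: distrib_left)
    also have "\<dots> = x - x ^ Suc L + (x ^ Suc L - x ^ Suc (Suc L))"
      using Suc by (simp add: algebra_simps)
    finally show ?case by simp
  qed
  then have "(1 - x) * (\<Sum>k=1..L. x ^ k) \<le> x" using assms by simp
  then show ?thesis using assms by (simp add: field_simps mult.commute)
qed

lemma final_real:
  fixes s G :: real
  assumes s0: "s \<ge> 0" and sR: "s * RL p L lam < 1" and G0: "G \<ge> 0"
  shows "(\<Sum>m=1..L. \<Sum>k=1..m. exp (- lam * real m) * s ^ k * (2 ^ h * exp (G * real m) * Pc p k m))
     \<le> 2 ^ h * exp (G * real L) * (s * RL p L lam / (1 - s * RL p L lam))"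
proof -
  let ?R = "RL p L lam"
  have "(\<Sum>m=1..L. \<Sum>k=1..m. exp (- lam * real m) * s ^ k * (2 ^ h * exp (G * real m) * Pc p k m))
      \<le> (\<Sum>m=1..L. \<Sum>k=1..L. 2 ^ h * exp (G * real L) * (s ^ k * (exp (- lam * real m) * Pc p k m)))"
  proof (intro sum_mono)
    fix m assume m: "m \<in> {1..L}"
    have "(\<Sum>k=1..m. exp (- lam * real m) * s ^ k * (2 ^ h * exp (G * real m) * Pc p k m))
        \<le> (\<Sum>k=1..m. 2 ^ h * exp (G * real L) * (s ^ k * (exp (- lam * real m) * Pc p k m)))"
    proof (intro sum_mono)
      fix k
      have "exp (G * real m) \<le> exp (G * real L)" using m G0 by (simp add: mult_left_mono)
      then have "exp (G * real m) * (s ^ k * (exp (- lam * real m) * Pc p k m)) \<le> exp (G * real L) * (s ^ k * (exp (- lam * real m) * Pc p k m))"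
        using s0 by (intro mult_right_mono) (simp_all add: Pc_nonneg)
      then have "2 ^ h * (exp (G * real m) * (s ^ k * (exp (- lam * real m) * Pc p k m))) \<le> 2 ^ h * (exp (G * real L) * (s ^ k * (exp (- lam * real m) * Pc p k m)))"
        by (rule mult_left_mono) simp
      then show "exp (- lam * real m) * s ^ k * (2 ^ h * exp (G * real m) * Pc p k m)
          \<le> 2 ^ h * exp (G * real L) * (s ^ k * (exp (- lam * real m) * Pc p k m))"
        by (simp add: mult_ac)
    qed
    also have "\<dots> \<le> (\<Sum>k=1..L. 2 ^ h * exp (G * real L) * (s ^ k * (exp (- lam * real m) * Pc p k m)))"
      using m s0 by (intro sum_mono2) (auto simp: Pc_nonneg)
    finally show "(\<Sum>k=1..m. exp (- lam * real m) * s ^ k * (2 ^ h * exp (G * real m) * Pc p k m))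
        \<le> (\<Sum>k=1..L. 2 ^ h * exp (G * real L) * (s ^ k * (exp (- lam * real m) * Pc p k m)))" .
  qed
  also have "\<dots> = 2 ^ h * exp (G * real L) * (\<Sum>k=1..L. s ^ k * (\<Sum>m=1..L. exp (- lam * real m) * Pc p k m))"
    by (subst sum.swap) (simp add: sum_distrib_left)
  also have "\<dots> \<le> 2 ^ h * exp (G * real L) * (\<Sum>k=1..L. (s * ?R) ^ k)"
  proof (intro mult_left_mono sum_mono)
    fix k assume "k \<in> {1..L}"
    then have "(\<Sum>m=1..L. exp (- lam * real m) * Pc p k m) \<le> ?R ^ k" by (intro P_sum) auto
    then show "s ^ k * (\<Sum>m=1..L. exp (- lam * real m) * Pc p k m) \<le> (s * ?R) ^ k"
      using s0 by (simp add: power_mult_distrib mult_left_mono)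
  qed simp
  also have "\<dots> \<le> 2 ^ h * exp (G * real L) * (s * ?R / (1 - s * ?R))"
    using s0 sR RL_nonneg[of p L lam] by (intro mult_left_mono geom_le) auto
  finally show ?thesis .
qed

definition rv :: "site \<Rightarrow> real \<times> real" where
  "rv v = (real_of_int (fst v), real_of_int (snd v))"

lemma znorm_rv: "znorm v = norm (rv v)"
  by (simp add: znorm_def rv_def norm_Pair)

lemma rv_diff: "rv (x - y) = rv x - rv y"
  by (simp add: rv_def)

lemma znorm_nonneg: "znorm v \<ge> 0" by (simp add: znorm_rv)

lemma znorm_zero: "znorm 0 = 0" by (simp add: znorm_def)

lemma znorm_tri: "znorm x - znorm z \<le> znorm (x - z)"
  unfolding znorm_rv rv_diff by (rule norm_triangle_ineq2)

lemma znorm_diff_abs: "\<bar>znorm x - znorm z\<bar> \<le> znorm (x - z)"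
  unfolding znorm_rv rv_diff by (rule norm_triangle_ineq3)

lemma znorm_sub_le: "znorm (x - y) \<le> znorm x + znorm y"
  unfolding znorm_rv rv_diff by (rule norm_triangle_ineq4)

lemma znorm_coord: "znorm v \<le> \<bar>coord 1 v\<bar> + \<bar>coord 2 v\<bar>"
proof -
  have "znorm v = norm (real_of_int (fst v), real_of_int (snd v))" by (simp add: znorm_rv rv_def)
  also have "\<dots> \<le> norm (real_of_int (fst v)) + norm (real_of_int (snd v))" by (rule norm_Pair_le)
  finally show ?thesis by (simp add: coord_def)
qed

lemma exp_abs_le: "exp \<bar>y::real\<bar> \<le> exp y + exp (- y)"
proof -
  have "exp y > 0" by simp
  have "exp (- y) > 0" by simp
  then show ?thesis using \<open>exp y > 0\<close> by (cases "y \<ge> 0") (simp_all add: abs_of_nonneg abs_of_neg)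
qed

lemma exp_znorm_tilt:
  assumes T: "T \<ge> 0"
  shows "exp (T * znorm v) \<le> 1/2 * (\<Sum>d<4. exp (2 * T * tilt d v))"
proof -
  define a where "a = coord 1 v"
  define b where "b = coord 2 v"
  have "exp (T * znorm v) \<le> exp (T * \<bar>a\<bar>) * exp (T * \<bar>b\<bar>)"
    using znorm_coord[of v] T by (simp add: a_def b_def exp_add[symmetric] mult_left_mono distrib_left[symmetric])
  also have "\<dots> \<le> 1/2 * (exp (T * \<bar>a\<bar>))\<^sup>2 + 1/2 * (exp (T * \<bar>b\<bar>))\<^sup>2"
  proof -
    have "0 \<le> (exp (T * \<bar>a\<bar>) - exp (T * \<bar>b\<bar>))\<^sup>2" by simp
    then show ?thesis by (simp add: power2_eq_square algebra_simps)
  qed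
  also have "(exp (T * \<bar>a\<bar>))\<^sup>2 = exp \<bar>2 * T * a\<bar>"
    using T by (simp add: power2_eq_square exp_add[symmetric] abs_mult)
  also have "(exp (T * \<bar>b\<bar>))\<^sup>2 = exp \<bar>2 * T * b\<bar>"
    using T by (simp add: power2_eq_square exp_add[symmetric] abs_mult)
  also have "1/2 * exp \<bar>2 * T * a\<bar> + 1/2 * exp \<bar>2 * T * b\<bar>
      \<le> 1/2 * (exp (2 * T * a) + exp (- (2 * T * a))) + 1/2 * (exp (2 * T * b) + exp (- (2 * T * b)))"
    using exp_abs_le[of "2 * T * a"] exp_abs_le[of "2 * T * b"] by (intro add_mono mult_left_mono) simp_all
  also have "\<dots> = 1/2 * (\<Sum>d<4. exp (2 * T * tilt d v))"
    by (simp add: eval_nat_numeral tilt_def a_def b_def algebra_simps)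
  finally show ?thesis .
qed

lemma weight_decomp:
  assumes T: "T \<ge> 0"
  shows "(\<Prod>i<h. exp (T * znorm (x ! i - z ! i)))
     \<le> (1/2) ^ h * (\<Sum>\<Theta>\<in>PiE {..<h} (\<lambda>_. {..<4::nat}). Etilt T \<Theta> h z x)"
proof -
  have "(\<Prod>i<h. exp (T * znorm (x ! i - z ! i))) \<le> (\<Prod>i<h. 1/2 * (\<Sum>d<4. exp (2 * T * tilt d (x ! i - z ! i))))"
    using exp_znorm_tilt[OF T] by (intro prod_mono) auto
  also have "\<dots> = (1/2) ^ h * (\<Prod>i<h. \<Sum>d<4. exp (2 * T * tilt d (x ! i - z ! i)))"
    by (subst prod.distrib) simp
  also have "(\<Prod>i<h. \<Sum>d<4. exp (2 * T * tilt d (x ! i - z ! i)))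
      = (\<Sum>\<Theta>\<in>PiE {..<h} (\<lambda>_. {..<4::nat}). \<Prod>i<h. exp (2 * T * tilt (\<Theta> i) (x ! i - z ! i)))"
    by (rule prod_sum_PiE) auto
  finally show ?thesis by (simp add: Etilt_def)
qed

lemma partition_pair:
  assumes "is_partition h I" "I \<noteq> star_partition h"
  shows "\<exists>a b. a < h \<and> b < h \<and> a \<noteq> b \<and> (\<forall>y. sim y I \<longrightarrow> y ! a = y ! b)"
proof (rule ccontr)
  assume na: "\<not> (\<exists>a b. a < h \<and> b < h \<and> a \<noteq> b \<and> (\<forall>y. sim y I \<longrightarrow> y ! a = y ! b))"
  have na': "a = b" if "a < h" "b < h" "\<forall>y. sim y I \<longrightarrow> y ! a = y ! b" for a b
    using na that by blast
  have P1: "\<Union>I = {..<h}" and P2: "{} \<notin> I" using assms(1) by (simp_all add: is_partition_def partition_on_def)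
  have single: "\<exists>i. B = {i}" if B: "B \<in> I" for B
  proof -
    have "B \<noteq> {}" using B P2 by metis
    then obtain i where i: "i \<in> B" by blast
    have "j = i" if j: "j \<in> B" for j
    proof (rule na')
      show "j < h" using j B P1 by blast
      show "i < h" using i B P1 by blast
      show "\<forall>y. sim y I \<longrightarrow> y ! j = y ! i" using B j i unfolding sim_def by blast
    qed
    then have "B = {i}" using i by blast
    then show ?thesis by blast
  qed
  have "I = star_partition h"
  proof
    show "I \<subseteq> star_partition h"
    proof
      fix B assume B: "B \<in> I"
      then obtain i where Bi: "B = {i}" using single by blast
      then have "i < h" using B P1 by blast
      then show "B \<in> star_partition h" using Bi unfolding star_partition_def by blast
    qed
    show "star_partition h \<subseteq> I"
    proof
      fix B assume "B \<in> star_partition h"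
      then obtain i where i: "i < h" "B = {i}" unfolding star_partition_def by blast
      then have "i \<in> \<Union>I" using P1 by simp
      then obtain B' where B': "B' \<in> I" "i \<in> B'" by blast
      then obtain j where "B' = {j}" using single by blast
      then have "B' = B" using B' i by simp
      then show "B \<in> I" using B' by simp
    qed
  qed
  then show False using assms(2) by simp
qed

lemma absU_finite:
  "absU p \<mu> \<beta> h I m z x = (\<Sum>k=1..m. \<bar>xi_I \<mu> \<beta> I\<bar> ^ k * Uchain p h I k m z x)"
proof -
  have "absU p \<mu> \<beta> h I m z x = infsum (\<lambda>k. \<bar>xi_I \<mu> \<beta> I\<bar> ^ k * Uchain p h I k m z x) {1..m}"
    unfolding absU_def by (rule infsum_cong_neutral) (auto simp: Uchain_zero)
  then show ?thesis by simp
qed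

lemma card_PiE4: "card (PiE {..<h} (\<lambda>_. {..<4::nat})) = 4 ^ h"
  by (simp add: card_PiE)

lemma e_test:
  fixes sg G lam :: real
  assumes s0: "sg \<ge> 0"
  shows "ennreal (exp (- lam * real m) * sg ^ k * (1/2) ^ h) * ennreal (4 ^ h * (exp (G * real m) * Pc p k m))
        = ennreal (exp (- lam * real m) * sg ^ k * (2 ^ h * exp (G * real m) * Pc p k m))"
proof -
  have h2: "(1/2::real) ^ h * 4 ^ h = 2 ^ h" by (simp add: power_mult_distrib[symmetric])
  have "exp (- lam * real m) * sg ^ k * (1/2) ^ h * (4 ^ h * (exp (G * real m) * Pc p k m)) = exp (- lam * real m) * sg ^ k * (((1/2) ^ h * 4 ^ h) * exp (G * real m) * Pc p k m)"
    by (simp only: mult_ac)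
  then have "exp (- lam * real m) * sg ^ k * (1/2) ^ h * (4 ^ h * (exp (G * real m) * Pc p k m)) = exp (- lam * real m) * sg ^ k * (2 ^ h * exp (G * real m) * Pc p k m)"
    by (simp only: h2)
  moreover have "exp (- lam * real m) * sg ^ k * (1/2) ^ h \<ge> 0" using s0 by simp
  moreover have "4 ^ h * (exp (G * real m) * Pc p k m) \<ge> 0" by (simp add: Pc_nonneg)
  ultimately show ?thesis by (simp only: ennreal_mult[symmetric])
qed
lemma sum2_ennreal:
  fixes f :: "nat \<Rightarrow> nat \<Rightarrow> real"
  assumes "\<And>m k. f m k \<ge> 0"
  shows "(\<Sum>m\<in>A. \<Sum>k\<in>B m. ennreal (f m k)) = ennreal (\<Sum>m\<in>A. \<Sum>k\<in>B m. f m k)"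
proof -
  have "(\<Sum>m\<in>A. \<Sum>k\<in>B m. ennreal (f m k)) = (\<Sum>m\<in>A. ennreal (\<Sum>k\<in>B m. f m k))"
    using assms by (intro sum.cong refl sum_ennreal)
  also have "\<dots> = ennreal (\<Sum>m\<in>A. \<Sum>k\<in>B m. f m k)"
    using assms by (intro sum_ennreal sum_nonneg)
  finally show ?thesis .
qed

lemma bnd_int:
  fixes F :: "(nat \<Rightarrow> nat) \<Rightarrow> nat \<Rightarrow> nat \<Rightarrow> config \<Rightarrow> ennreal"
  assumes u: "u \<in> S"
    and FB: "\<And>\<Theta> k m. \<Theta> \<in> PiE {..<h} (\<lambda>_. {..<4::nat}) \<Longrightarrow>
        (\<integral>\<^sup>+y. F \<Theta> k m y \<partial>count_space S) \<le> ennreal (exp (G * real m) * Pc p k m)"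
    and s0: "sg \<ge> 0" and sR: "sg * RL p L lam < 1" and G0: "G \<ge> 0"
  shows "(\<integral>\<^sup>+y. (if y = u then 1 else 0) + (\<Sum>m=1..L. \<Sum>k=1..m. ennreal (exp (- lam * real m) * sg ^ k * (1/2) ^ h)
        * (\<Sum>\<Theta>\<in>PiE {..<h} (\<lambda>_. {..<4::nat}). F \<Theta> k m y)) \<partial>count_space S)
     \<le> ennreal (1 + 2 ^ h * exp (G * real L) * (sg * RL p L lam / (1 - sg * RL p L lam)))"
proof -
  let ?P = "PiE {..<h} (\<lambda>_. {..<4::nat})"
  let ?c = "\<lambda>m k. exp (- lam * real m) * sg ^ k * (1/2) ^ h"
  have fin: "finite ?P" by (simp add: finite_PiE)
  have c0: "?c m k \<ge> 0" for m k using s0 by simp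
  have I1: "(\<integral>\<^sup>+y. (if y = u then 1 else 0) + (\<Sum>m=1..L. \<Sum>k=1..m. ennreal (?c m k) * (\<Sum>\<Theta>\<in>?P. F \<Theta> k m y)) \<partial>count_space S)
      = (\<integral>\<^sup>+y. (if y = u then 1 else 0) \<partial>count_space S)
        + (\<Sum>m=1..L. \<Sum>k=1..m. ennreal (?c m k) * (\<Sum>\<Theta>\<in>?P. \<integral>\<^sup>+y. F \<Theta> k m y \<partial>count_space S))"
    by (simp add: nn_integral_add nn_integral_sum nn_integral_cmult)
  have I2: "(\<integral>\<^sup>+y. (if y = u then 1 else 0) \<partial>count_space S) = 1"
  proof -
    have "(\<integral>\<^sup>+y. (if y = u then 1 else 0) \<partial>count_space S) = (\<Sum>y\<in>{u}. (if y = u then 1 else 0))"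
      using u by (intro nn_integral_count_space') auto
    then show ?thesis by simp
  qed
  have I3: "(\<Sum>m=1..L. \<Sum>k=1..m. ennreal (?c m k) * (\<Sum>\<Theta>\<in>?P. \<integral>\<^sup>+y. F \<Theta> k m y \<partial>count_space S))
      \<le> (\<Sum>m=1..L. \<Sum>k=1..m. ennreal (?c m k) * ennreal (4 ^ h * (exp (G * real m) * Pc p k m)))"
  proof (intro sum_mono mult_left_mono)
    fix m k
    have "(\<Sum>\<Theta>\<in>?P. \<integral>\<^sup>+y. F \<Theta> k m y \<partial>count_space S) \<le> (\<Sum>\<Theta>\<in>?P. ennreal (exp (G * real m) * Pc p k m))"
      by (intro sum_mono FB)
    also have "\<dots> = ennreal (\<Sum>\<Theta>\<in>?P. exp (G * real m) * Pc p k m)"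
      by (rule sum_ennreal) (simp add: Pc_nonneg)
    also have "(\<Sum>\<Theta>\<in>?P. exp (G * real m) * Pc p k m) = 4 ^ h * (exp (G * real m) * Pc p k m)"
      by (simp add: card_PiE4)
    finally show "(\<Sum>\<Theta>\<in>?P. \<integral>\<^sup>+y. F \<Theta> k m y \<partial>count_space S) \<le> ennreal (4 ^ h * (exp (G * real m) * Pc p k m))" .
  qed simp
  have I4: "(\<Sum>m=1..L. \<Sum>k=1..m. ennreal (?c m k) * ennreal (4 ^ h * (exp (G * real m) * Pc p k m)))
      = ennreal (\<Sum>m=1..L. \<Sum>k=1..m. exp (- lam * real m) * sg ^ k * (2 ^ h * exp (G * real m) * Pc p k m))"
    unfolding e_test[OF s0]
    by (rule sum2_ennreal) (use s0 in \<open>simp add: Pc_nonneg\<close>)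
  have "(\<integral>\<^sup>+y. (if y = u then 1 else 0) + (\<Sum>m=1..L. \<Sum>k=1..m. ennreal (?c m k) * (\<Sum>\<Theta>\<in>?P. F \<Theta> k m y)) \<partial>count_space S)
      \<le> 1 + ennreal (\<Sum>m=1..L. \<Sum>k=1..m. exp (- lam * real m) * sg ^ k * (2 ^ h * exp (G * real m) * Pc p k m))"
    unfolding I1 I2 I4[symmetric] using I3 by (rule add_left_mono)
  also have "\<dots> \<le> 1 + ennreal (2 ^ h * exp (G * real L) * (sg * RL p L lam / (1 - sg * RL p L lam)))"
    using final_real[OF s0 sR G0, of h] by (intro add_left_mono ennreal_leI)
  also have "\<dots> = ennreal (1 + 2 ^ h * exp (G * real L) * (sg * RL p L lam / (1 - sg * RL p L lam)))"
    using s0 sR RL_nonneg[of p L lam] by (subst ennreal_plus) (auto intro!: divide_nonneg_pos)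
  finally show ?thesis .
qed

lemma absUhat_nonneg: "absUhat p \<mu> \<beta> h I L lam z x \<ge> 0"
  unfolding absUhat_def absU_finite
  by (intro add_nonneg_nonneg sum_nonneg mult_nonneg_nonneg) (auto simp: Uchain_nonneg)

lemma pointwise:
  fixes w :: "config \<Rightarrow> config \<Rightarrow> real"
  assumes T: "T \<ge> 0" and w0: "w z x \<ge> 0"
    and wb: "w z x \<le> (\<Prod>i<h. exp (T * znorm (x ! i - z ! i)))"
    and xs: "\<bar>xi_I \<mu> \<beta> I\<bar> \<le> sg"
  shows "ennreal (w z x * absUhat p \<mu> \<beta> h I L lam z x) \<le> (if x = z then 1 else 0)
     + (\<Sum>m=1..L. \<Sum>k=1..m. ennreal (exp (- lam * real m) * sg ^ k * (1/2) ^ h)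
        * (\<Sum>\<Theta>\<in>PiE {..<h} (\<lambda>_. {..<4::nat}). ennreal (Etilt T \<Theta> h z x * Uchain p h I k m z x)))"
proof -
  let ?P = "PiE {..<h} (\<lambda>_. {..<4::nat})"
  let ?xi = "\<bar>xi_I \<mu> \<beta> I\<bar>"
  let ?S = "\<lambda>k m. (\<Sum>\<Theta>\<in>?P. Etilt T \<Theta> h z x * Uchain p h I k m z x)"
  have sg0: "sg \<ge> 0" using xs by linarith
  have S0: "?S k m \<ge> 0" for k m by (intro sum_nonneg mult_nonneg_nonneg) (auto simp: Uchain_nonneg less_imp_le[OF Etilt_pos])
  have ind: "w z x * (if z = x \<and> sim x I then 1 else 0) \<le> (if x = z then 1 else 0)"
  proof (cases "z = x")
    case True
    then have "w z x \<le> 1" using wb by (simp add: znorm_zero)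
    then show ?thesis using True by simp
  qed simp
  have wU: "w z x * Uchain p h I k m z x \<le> (1/2) ^ h * ?S k m" for k m
  proof -
    have "w z x * Uchain p h I k m z x \<le> ((1/2) ^ h * (\<Sum>\<Theta>\<in>?P. Etilt T \<Theta> h z x)) * Uchain p h I k m z x"
      using order_trans[OF wb weight_decomp[OF T, where h=h and x=x and z=z]] by (intro mult_right_mono) (simp_all add: Uchain_nonneg)
    also have "\<dots> = (1/2) ^ h * ?S k m" by (simp add: sum_distrib_right mult.assoc)
    finally show ?thesis .
  qed
  have "w z x * absUhat p \<mu> \<beta> h I L lam z x
      = w z x * (if z = x \<and> sim x I then 1 else 0)
        + (\<Sum>m=1..L. \<Sum>k=1..m. exp (- lam * real m) * ?xi ^ k * (w z x * Uchain p h I k m z x))"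
    unfolding absUhat_def absU_finite
    by (simp add: distrib_left sum_distrib_left mult_ac)
  also have "\<dots> \<le> (if x = z then 1 else 0)
        + (\<Sum>m=1..L. \<Sum>k=1..m. exp (- lam * real m) * sg ^ k * (1/2) ^ h * ?S k m)"
  proof (intro add_mono ind sum_mono)
    fix m k
    have "exp (- lam * real m) * ?xi ^ k * (w z x * Uchain p h I k m z x)
        \<le> exp (- lam * real m) * sg ^ k * ((1/2) ^ h * ?S k m)"
    proof (rule mult_mono)
      show "exp (- lam * real m) * ?xi ^ k \<le> exp (- lam * real m) * sg ^ k"
        using xs by (intro mult_left_mono power_mono) auto
      show "w z x * Uchain p h I k m z x \<le> (1/2) ^ h * ?S k m" by (rule wU)
      show "0 \<le> exp (- lam * real m) * sg ^ k" using sg0 by simp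
      show "0 \<le> w z x * Uchain p h I k m z x" using w0 by (simp add: Uchain_nonneg)
    qed
    then show "exp (- lam * real m) * ?xi ^ k * (w z x * Uchain p h I k m z x)
        \<le> exp (- lam * real m) * sg ^ k * (1/2) ^ h * ?S k m" by (simp add: mult.assoc)
  qed
  finally have R: "w z x * absUhat p \<mu> \<beta> h I L lam z x \<le> (if x = z then 1 else 0)
        + (\<Sum>m=1..L. \<Sum>k=1..m. exp (- lam * real m) * sg ^ k * (1/2) ^ h * ?S k m)" .
  have nn: "0 \<le> exp (- lam * real m) * sg ^ k * (1/2) ^ h * ?S k m" for m k
    using sg0 S0 by simp
  have "ennreal ((if x = z then 1 else 0) + (\<Sum>m=1..L. \<Sum>k=1..m. exp (- lam * real m) * sg ^ k * (1/2) ^ h * ?S k m))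
      = ennreal (if x = z then 1 else 0) + ennreal (\<Sum>m=1..L. \<Sum>k=1..m. exp (- lam * real m) * sg ^ k * (1/2) ^ h * ?S k m)"
    using nn by (intro ennreal_plus) (auto intro!: sum_nonneg)
  also have "ennreal (\<Sum>m=1..L. \<Sum>k=1..m. exp (- lam * real m) * sg ^ k * (1/2) ^ h * ?S k m)
      = (\<Sum>m=1..L. \<Sum>k=1..m. ennreal (exp (- lam * real m) * sg ^ k * (1/2) ^ h * ?S k m))"
    by (rule sum2_ennreal[symmetric]) (rule nn)
  also have "\<dots> = (\<Sum>m=1..L. \<Sum>k=1..m. ennreal (exp (- lam * real m) * sg ^ k * (1/2) ^ h)
        * (\<Sum>\<Theta>\<in>?P. ennreal (Etilt T \<Theta> h z x * Uchain p h I k m z x)))"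
  proof (intro sum.cong refl)
    fix m k
    have "ennreal (exp (- lam * real m) * sg ^ k * (1/2) ^ h * ?S k m) = ennreal (exp (- lam * real m) * sg ^ k * (1/2) ^ h) * ennreal (?S k m)"
      using sg0 S0[of k m] by (intro ennreal_mult) auto
    also have "ennreal (?S k m) = (\<Sum>\<Theta>\<in>?P. ennreal (Etilt T \<Theta> h z x * Uchain p h I k m z x))"
      by (rule sum_ennreal[symmetric]) (auto simp: Uchain_nonneg less_imp_le[OF Etilt_pos])
    finally show "ennreal (exp (- lam * real m) * sg ^ k * (1/2) ^ h * ?S k m) = ennreal (exp (- lam * real m) * sg ^ k * (1/2) ^ h)
        * (\<Sum>\<Theta>\<in>?P. ennreal (Etilt T \<Theta> h z x * Uchain p h I k m z x))" .
  qed
  finally have E: "ennreal ((if x = z then 1 else 0) + (\<Sum>m=1..L. \<Sum>k=1..m. exp (- lam * real m) * sg ^ k * (1/2) ^ h * ?S k m))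
      = ennreal (if x = z then 1 else 0) + (\<Sum>m=1..L. \<Sum>k=1..m. ennreal (exp (- lam * real m) * sg ^ k * (1/2) ^ h)
        * (\<Sum>\<Theta>\<in>?P. ennreal (Etilt T \<Theta> h z x * Uchain p h I k m z x)))" .
  have "ennreal (if x = z then 1 else 0) = (if x = z then 1 else 0)" by simp
  then show ?thesis using ennreal_leI[OF R] unfolding E by simp
qed

context walkctx
begin

lemma main_bound:
  fixes w :: "config \<Rightarrow> config \<Rightarrow> real"
  assumes part: "is_partition h I" and nstar: "I \<noteq> star_partition h" and T: "T \<ge> 0"
    and xs: "\<bar>xi_I \<mu> \<beta> I\<bar> \<le> sg" and sR: "sg * RL p L lam < 1" and q1: "q > 1"
    and w0: "\<And>z x. w z x \<ge> 0"
    and wb: "\<And>z x. z \<in> configs h \<Longrightarrow> x \<in> configs h \<Longrightarrow> w z x \<le> (\<Prod>i<h. exp (T * znorm (x ! i - z ! i)))"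
  shows "lq_opnorm_le q (configs_I h I) (\<lambda>z x. w z x * absUhat p \<mu> \<beta> h I L lam z x)
     (1 + (2 * exp (4 * cc * T\<^sup>2 * real L)) ^ h * (sg * RL p L lam / (1 - sg * RL p L lam)))"
proof -
  obtain a b where ab: "a < h" "b < h" "a \<noteq> b" and simab: "\<And>y. sim y I \<Longrightarrow> y ! a = y ! b"
    using partition_pair[OF part nstar] by blast
  let ?P = "PiE {..<h} (\<lambda>_. {..<4::nat})"
  let ?G = "4 * cc * T\<^sup>2 * real h"
  let ?X = "sg * RL p L lam / (1 - sg * RL p L lam)"
  let ?C = "1 + (2 * exp (4 * cc * T\<^sup>2 * real L)) ^ h * ?X"
  have sg0: "sg \<ge> 0" using xs by linarith
  have G0: "?G \<ge> 0" using cc_ge1 by simp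
  have X0: "?X \<ge> 0" using sg0 sR RL_nonneg[of p L lam] by (intro divide_nonneg_pos) auto
  have Ceq: "1 + 2 ^ h * exp (?G * real L) * ?X = ?C"
  proof -
    have "exp (?G * real L) = exp (4 * cc * T\<^sup>2 * real L) ^ h"
      by (simp add: exp_of_nat_mult[symmetric] mult_ac)
    then show ?thesis by (simp add: power_mult_distrib)
  qed
  have C0: "?C \<ge> 0" using X0 by (intro add_nonneg_nonneg mult_nonneg_nonneg) auto
  have sub: "configs_I h I \<subseteq> configs h" by (auto simp: configs_I_def configs_def)
  have ThP: "\<And>i. i < h \<Longrightarrow> \<Theta> i < 4" if "\<Theta> \<in> ?P" for \<Theta>
    using that by (auto simp: PiE_def Pi_def)
  define Bnd where "Bnd z x = (if x = z then 1 else 0)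
     + (\<Sum>m=1..L. \<Sum>k=1..m. ennreal (exp (- lam * real m) * sg ^ k * (1/2) ^ h)
        * (\<Sum>\<Theta>\<in>?P. ennreal (Etilt T \<Theta> h z x * Uchain p h I k m z x)))" for z x
  have pw: "ennreal (w z x * absUhat p \<mu> \<beta> h I L lam z x) \<le> Bnd z x"
    if "z \<in> configs_I h I" "x \<in> configs_I h I" for z x
    unfolding Bnd_def using that sub by (intro pointwise[OF T w0 wb xs]) auto
  show ?thesis
  proof (rule schur[OF q1])
    show "countable (configs_I h I)" by (rule countableI_type)
    show "0 \<le> ?C" by (rule C0)
    show "0 \<le> w z x * absUhat p \<mu> \<beta> h I L lam z x" for z x
      using w0 absUhat_nonneg by (rule mult_nonneg_nonneg)
  next
    fix z assume z: "z \<in> configs_I h I"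
    have "(\<integral>\<^sup>+x. ennreal (w z x * absUhat p \<mu> \<beta> h I L lam z x) \<partial>count_space (configs_I h I))
        \<le> (\<integral>\<^sup>+x. Bnd z x \<partial>count_space (configs_I h I))"
      using z pw by (intro nn_integral_mono) auto
    also have "\<dots> \<le> (\<integral>\<^sup>+x. Bnd z x \<partial>count_space (configs h))"
      by (rule nn_count_mono[OF sub])
    also have "\<dots> \<le> ennreal (1 + 2 ^ h * exp (?G * real L) * ?X)"
      unfolding Bnd_def
    proof (rule bnd_int[where F="\<lambda>\<Theta> k m x. ennreal (Etilt T \<Theta> h z x * Uchain p h I k m z x)", OF _ _ sg0 sR G0])
      show "z \<in> configs h" using z sub by auto
      fix \<Theta> k m assume th: "\<Theta> \<in> ?P"
      show "(\<integral>\<^sup>+x. ennreal (Etilt T \<Theta> h z x * Uchain p h I k m z x) \<partial>count_space (configs h))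
          \<le> ennreal (exp (?G * real m) * Pc p k m)"
        using chain_row[where a=a and b=b and h=h and T=T and I=I and \<Theta>=\<Theta> and z=z and k=k and m=m, OF ab T simab ThP[OF th]] by (simp add: mult_ac)
    qed
    finally show "(\<integral>\<^sup>+x. ennreal (w z x * absUhat p \<mu> \<beta> h I L lam z x) \<partial>count_space (configs_I h I)) \<le> ennreal ?C"
      unfolding Ceq .
  next
    fix x assume x: "x \<in> configs_I h I"
    have "(\<integral>\<^sup>+z. ennreal (w z x * absUhat p \<mu> \<beta> h I L lam z x) \<partial>count_space (configs_I h I))
        \<le> (\<integral>\<^sup>+z. Bnd z x \<partial>count_space (configs_I h I))"
      using x pw by (intro nn_integral_mono) auto
    also have "\<dots> \<le> (\<integral>\<^sup>+z. Bnd z x \<partial>count_space (configs h))"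
      by (rule nn_count_mono[OF sub])
    also have "\<dots> = (\<integral>\<^sup>+z. (if z = x then 1 else 0)
     + (\<Sum>m=1..L. \<Sum>k=1..m. ennreal (exp (- lam * real m) * sg ^ k * (1/2) ^ h)
        * (\<Sum>\<Theta>\<in>?P. ennreal (Etilt T \<Theta> h z x * Uchain p h I k m z x))) \<partial>count_space (configs h))"
      unfolding Bnd_def by (intro nn_integral_cong) auto
    also have "\<dots> \<le> ennreal (1 + 2 ^ h * exp (?G * real L) * ?X)"
    proof (rule bnd_int[where F="\<lambda>\<Theta> k m z. ennreal (Etilt T \<Theta> h z x * Uchain p h I k m z x)", OF _ _ sg0 sR G0])
      show "x \<in> configs h" using x sub by auto
      fix \<Theta> k m assume th: "\<Theta> \<in> ?P"
      show "(\<integral>\<^sup>+z. ennreal (Etilt T \<Theta> h z x * Uchain p h I k m z x) \<partial>count_space (configs h))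
          \<le> ennreal (exp (?G * real m) * Pc p k m)"
        using chain_col[where a=a and b=b and h=h and T=T and I=I and \<Theta>=\<Theta> and x=x and k=k and m=m, OF ab T simab ThP[OF th]] by (simp add: mult_ac)
    qed
    finally show "(\<integral>\<^sup>+z. ennreal (w z x * absUhat p \<mu> \<beta> h I L lam z x) \<partial>count_space (configs_I h I)) \<le> ennreal ?C"
      unfolding Ceq .
  qed
qed

end

lemma Wt_pos: "Wt t z > 0"
  unfolding Wt_def by (intro prod_pos) auto

lemma Vpair_pos: "Vpair s a b z > 0"
  unfolding Vpair_def by simp

lemma Wt_ratio:
  assumes "z \<in> configs h" "x \<in> configs h"
  shows "Wt t z / Wt t x = (\<Prod>i<h. exp (t * (znorm (x ! i) - znorm (z ! i))))"
proof -
  have "Wt t z / Wt t x = (\<Prod>i<h. exp (- t * znorm (z ! i))) / (\<Prod>i<h. exp (- t * znorm (x ! i)))"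
    using assms by (simp add: Wt_def configs_def)
  also have "\<dots> = (\<Prod>i<h. exp (- t * znorm (z ! i)) / exp (- t * znorm (x ! i)))"
    by (rule prod_dividef[symmetric])
  also have "\<dots> = (\<Prod>i<h. exp (t * (znorm (x ! i) - znorm (z ! i))))"
    by (intro prod.cong refl) (simp add: exp_diff[symmetric] algebra_simps)
  finally show ?thesis .
qed

lemma W1:
  assumes "z \<in> configs h" "x \<in> configs h" "t \<ge> 0"
  shows "Wt t z / Wt t x \<le> (\<Prod>i<h. exp (t * znorm (x ! i - z ! i)))"
  unfolding Wt_ratio[OF assms(1,2)]
proof (intro prod_mono conjI)
  fix i
  show "0 \<le> exp (t * (znorm (x ! i) - znorm (z ! i)))" by simp
  have "t * (znorm (x ! i) - znorm (z ! i)) \<le> t * znorm (x ! i - z ! i)"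
    using assms(3) znorm_tri[of "x ! i" "z ! i"] by (rule mult_left_mono[rotated])
  then show "exp (t * (znorm (x ! i) - znorm (z ! i))) \<le> exp (t * znorm (x ! i - z ! i))" by simp
qed

lemma W2:
  assumes zx: "z \<in> configs h" "x \<in> configs h" and t: "t \<ge> 0" and s: "s \<ge> 0"
    and tau: "\<tau> \<in> {1, -1::real}" and ab: "a < h" "b < h" "a \<noteq> b"
  shows "Vpair s a b z powr \<tau> * Wt t z / (Wt t x * Vpair s a b x powr \<tau>)
      \<le> (\<Prod>i<h. exp ((t + s) * znorm (x ! i - z ! i)))"
proof -
  define dz where "dz = znorm (z ! a - z ! b)"
  define dx where "dx = znorm (x ! a - x ! b)"
  define d where "d i = znorm (x ! i - z ! i)" for i
  have d0: "d i \<ge> 0" for i by (simp add: d_def znorm_nonneg)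
  have "Vpair s a b z powr \<tau> * Wt t z / (Wt t x * Vpair s a b x powr \<tau>)
      = (Wt t z / Wt t x) * exp (\<tau> * s * (dx - dz))"
  proof -
    have "Wt t x > 0" by (rule Wt_pos)
    moreover have "Vpair s a b x > 0" by (rule Vpair_pos)
    then have "Vpair s a b x powr \<tau> > 0" by simp
    ultimately have p1: "Wt t x > 0" "Vpair s a b x powr \<tau> > 0" by auto
    have "Vpair s a b z powr \<tau> * Wt t z / (Wt t x * Vpair s a b x powr \<tau>)
        = (Wt t z / Wt t x) * (Vpair s a b z powr \<tau> / Vpair s a b x powr \<tau>)"
      using p1 by (simp add: field_simps)
    also have "Vpair s a b z powr \<tau> / Vpair s a b x powr \<tau> = exp (\<tau> * s * (dx - dz))"
      by (simp add: Vpair_def exp_powr_real dz_def dx_def exp_diff[symmetric] algebra_simps)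
    finally show ?thesis .
  qed
  also have "\<dots> \<le> (\<Prod>i<h. exp (t * d i)) * (exp (s * d a) * exp (s * d b))"
  proof (rule mult_mono)
    show "Wt t z / Wt t x \<le> (\<Prod>i<h. exp (t * d i))" unfolding d_def by (rule W1[OF zx t])
    have "\<tau> * s * (dx - dz) \<le> s * \<bar>dx - dz\<bar>"
    proof -
      have "\<tau> * s * (dx - dz) \<le> \<bar>\<tau> * s * (dx - dz)\<bar>" by (rule abs_ge_self)
      also have "\<dots> = s * \<bar>dx - dz\<bar>" using tau s by (auto simp: abs_mult)
      finally show ?thesis .
    qed
    also have "\<bar>dx - dz\<bar> \<le> znorm ((x ! a - x ! b) - (z ! a - z ! b))"
      unfolding dx_def dz_def by (rule znorm_diff_abs)
    also have "(x ! a - x ! b) - (z ! a - z ! b) = (x ! a - z ! a) - (x ! b - z ! b)"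
      by (simp add: algebra_simps)
    also have "znorm \<dots> \<le> d a + d b" unfolding d_def by (rule znorm_sub_le)
    finally have "\<tau> * s * (dx - dz) \<le> s * (d a + d b)" using s by (simp add: mult_left_mono)
    then show "exp (\<tau> * s * (dx - dz)) \<le> exp (s * d a) * exp (s * d b)"
      by (simp add: exp_add[symmetric] distrib_left)
  qed (auto intro: prod_nonneg)
  also have "\<dots> \<le> (\<Prod>i<h. exp (t * d i)) * (\<Prod>i<h. exp (s * d i))"
  proof (intro mult_left_mono)
    have "(\<Prod>i<h. exp (s * d i)) = exp (s * d a) * exp (s * d b) * (\<Prod>i\<in>{..<h} - {a, b}. exp (s * d i))"
      by (rule prod_split2[OF ab])
    moreover have "(\<Prod>i\<in>{..<h} - {a, b}. exp (s * d i)) \<ge> 1"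
      using s d0 by (intro prod_ge_1) auto
    moreover have "exp (s * d a) * exp (s * d b) > 0" by simp
    ultimately show "exp (s * d a) * exp (s * d b) \<le> (\<Prod>i<h. exp (s * d i))"
      by (metis mult_le_cancel_left1 less_imp_not_less)
  qed (auto intro: prod_nonneg)
  also have "\<dots> = (\<Prod>i<h. exp ((t + s) * znorm (x ! i - z ! i)))"
    by (simp add: prod.distrib[symmetric] exp_add[symmetric] d_def distrib_right)
  finally show ?thesis .
qed

theorem proposition4p24:
  fixes p :: "site pmf" and \<mu> :: "real measure" and cc \<beta> t lam q :: real
    and h L :: nat
  assumes symm: "\<And>x. pmf p x = pmf p (- x)"
    and subgauss: "\<exists>c0>0. \<forall>(t'::real). \<forall>a\<in>{1,2::nat}.
        (\<lambda>x. exp (t' * coord a x) * pmf p x) summable_on UNIV \<and>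
        (\<Sum>\<^sub>\<infinity>x. exp (t' * coord a x) * pmf p x) \<le> exp (c0 * t'\<^sup>2 / 2)"
    and cc_ge1: "cc \<ge> 1"
    and cc1: "\<And>t' n a. t' \<ge> 0 \<Longrightarrow> n \<ge> 1 \<Longrightarrow> a \<in> {1,2} \<Longrightarrow>
        (\<lambda>x. exp (t' * coord a x) * qn p n x) summable_on UNIV \<and>
        (\<Sum>\<^sub>\<infinity>x. exp (t' * coord a x) * qn p n x) \<le> exp (cc * t'\<^sup>2 * real n / 2)"
    and cc2: "\<And>t' n a. t' \<ge> 0 \<Longrightarrow> n \<ge> 1 \<Longrightarrow> a \<in> {1,2} \<Longrightarrow>
        (\<lambda>x. exp (t' * coord a x) * (qn p n x)\<^sup>2 / qn p (2 * n) 0) summable_on UNIV \<and>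
        (\<Sum>\<^sub>\<infinity>x. exp (t' * coord a x) * (qn p n x)\<^sup>2 / qn p (2 * n) 0) \<le> exp (cc * t'\<^sup>2 * real n / 2)"
    and cc3: "\<And>t' n. t' \<ge> 0 \<Longrightarrow> n \<ge> 1 \<Longrightarrow>
        (\<lambda>x. exp (t' * znorm x) * qn p n x) summable_on UNIV \<and>
        (\<Sum>\<^sub>\<infinity>x. exp (t' * znorm x) * qn p n x) \<le> cc * exp (2 * cc * t'\<^sup>2 * real n)"
    and cc4: "\<And>t' n x. t' \<ge> 0 \<Longrightarrow> n \<ge> 1 \<Longrightarrow>
        exp (t' * znorm x) * qn p n x \<le> cc * exp (2 * cc * t'\<^sup>2 * real n) / real n"
    and prob: "prob_space \<mu>" and borel: "sets \<mu> = sets borel"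
    and mgf: "\<And>b. integrable \<mu> (\<lambda>w. exp (b * w))"
    and mean0: "(\<integral>w. w \<partial>\<mu>) = 0" and var1: "(\<integral>w. w\<^sup>2 \<partial>\<mu>) = 1"
    and beta_pos: "\<beta> > 0"
    and h2: "h \<ge> 2"
    and moments: "\<And>I. is_partition h I \<Longrightarrow> I \<noteq> star_partition h \<Longrightarrow>
        \<bar>xi_I \<mu> \<beta> I\<bar> \<le> sigma2 \<mu> \<beta>"
    and t0: "t \<ge> 0" and lam0: "lam \<ge> 0"
    and small: "sigma2 \<mu> \<beta> * RL p L lam < 1"
    and q1: "q > 1"
  shows "(\<forall>I. is_partition h I \<and> I \<noteq> star_partition h \<longrightarrow>
            lq_opnorm_le q (configs_I h I)
              (\<lambda>z x. Wt t z * absUhat p \<mu> \<beta> h I L lam z x / Wt t x)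
              (1 + (2 * exp (4 * cc * t\<^sup>2 * real L)) ^ h
                 * (sigma2 \<mu> \<beta> * RL p L lam / (1 - sigma2 \<mu> \<beta> * RL p L lam))))
       \<and> (\<forall>s\<ge>0. \<forall>\<tau>\<in>{1, -1::real}. \<forall>a<h. \<forall>b<h. a \<noteq> b \<longrightarrow>
            (\<forall>I. is_partition h I \<and> I \<noteq> star_partition h \<longrightarrow>
              lq_opnorm_le q (configs_I h I)
                (\<lambda>z x. Vpair s a b z powr \<tau> * Wt t z * absUhat p \<mu> \<beta> h I L lam z x
                        / (Wt t x * Vpair s a b x powr \<tau>))
                (1 + (2 * exp (4 * cc * (t + s)\<^sup>2 * real L)) ^ h
                   * (sigma2 \<mu> \<beta> * RL p L lam / (1 - sigma2 \<mu> \<beta> * RL p L lam)))))"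
proof -
  interpret W: walkctx p cc
    by (rule walkctx.intro) (fact symm, fact cc_ge1, fact cc1, fact cc2)
  show ?thesis
  proof (intro conjI allI impI ballI)
    fix I assume I: "is_partition h I \<and> I \<noteq> star_partition h"
    have k: "(\<lambda>z x. Wt t z * absUhat p \<mu> \<beta> h I L lam z x / Wt t x)
        = (\<lambda>z x. (Wt t z / Wt t x) * absUhat p \<mu> \<beta> h I L lam z x)"
      by (simp add: times_divide_eq_left)
    show "lq_opnorm_le q (configs_I h I)
              (\<lambda>z x. Wt t z * absUhat p \<mu> \<beta> h I L lam z x / Wt t x)
              (1 + (2 * exp (4 * cc * t\<^sup>2 * real L)) ^ h
                 * (sigma2 \<mu> \<beta> * RL p L lam / (1 - sigma2 \<mu> \<beta> * RL p L lam)))"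
      unfolding k
    proof (rule W.main_bound)
      show "is_partition h I" "I \<noteq> star_partition h" using I by auto
      show "\<bar>xi_I \<mu> \<beta> I\<bar> \<le> sigma2 \<mu> \<beta>" using I moments by auto
      show "0 \<le> Wt t z / Wt t x" for z x using Wt_pos[of t z] Wt_pos[of t x] by simp
      show "Wt t z / Wt t x \<le> (\<Prod>i<h. exp (t * znorm (x ! i - z ! i)))"
        if "z \<in> configs h" "x \<in> configs h" for z x using W1[OF that t0] .
    qed (use t0 small q1 in auto)
  next
    fix s :: real and \<tau> a b I
    assume s: "s \<ge> 0" and tau: "\<tau> \<in> {1, -1::real}" and a: "a < h" and b: "b < h" and ab: "a \<noteq> b"
      and I: "is_partition h I \<and> I \<noteq> star_partition h"
    have k: "(\<lambda>z x. Vpair s a b z powr \<tau> * Wt t z * absUhat p \<mu> \<beta> h I L lam z x / (Wt t x * Vpair s a b x powr \<tau>))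
        = (\<lambda>z x. (Vpair s a b z powr \<tau> * Wt t z / (Wt t x * Vpair s a b x powr \<tau>)) * absUhat p \<mu> \<beta> h I L lam z x)"
      by (simp add: times_divide_eq_left)
    show "lq_opnorm_le q (configs_I h I)
                (\<lambda>z x. Vpair s a b z powr \<tau> * Wt t z * absUhat p \<mu> \<beta> h I L lam z x
                        / (Wt t x * Vpair s a b x powr \<tau>))
                (1 + (2 * exp (4 * cc * (t + s)\<^sup>2 * real L)) ^ h
                   * (sigma2 \<mu> \<beta> * RL p L lam / (1 - sigma2 \<mu> \<beta> * RL p L lam)))"
      unfolding k
    proof (rule W.main_bound)
      show "is_partition h I" "I \<noteq> star_partition h" using I by auto
      show "\<bar>xi_I \<mu> \<beta> I\<bar> \<le> sigma2 \<mu> \<beta>" using I moments by auto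
      show "0 \<le> Vpair s a b z powr \<tau> * Wt t z / (Wt t x * Vpair s a b x powr \<tau>)" for z x
        using Wt_pos[of t z] Wt_pos[of t x] by simp
      show "Vpair s a b z powr \<tau> * Wt t z / (Wt t x * Vpair s a b x powr \<tau>) \<le> (\<Prod>i<h. exp ((t + s) * znorm (x ! i - z ! i)))"
        if "z \<in> configs h" "x \<in> configs h" for z x using W2[OF that t0 s tau a b ab] .
    qed (use t0 s small q1 in auto)
  qed
qed


end
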